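(* Let $P$ be an ergodic transition matrix on a finite set $\mathcal{X}$ with pseudo-spectral gap $\gamma_{\mathsf{ps}}$ and let $k_{\mathsf{ps}}$ be as defined below. For every integer $p\ge 1$, $$p\,\gamma_{\mathsf{ps}}\Big(1-\frac{p\,k_{\mathsf{ps}}\gamma_{\mathsf{ps}}}{2}\Big)<\gamma^{(p)}_{\mathsf{ps}}\le p\,\gamma_{\mathsf{ps}} .$$ Consequently, if $p\le 1/(k_{\mathsf{ps}}\gamma_{\mathsf{ps}})$, then $\gamma^{(p)}_{\mathsf{ps}}\ge p\gamma_{\mathsf{ps}}/2$.
   Context: $P$ is row-stochastic on finite $\mathcal{X}$, ergodic (primitive), with unique stationary distribution $\pi>0$. The time reversal is $P^\star(x,x')=\pi(x')P(x',x)/\pi(x)$. For a transition matrix $Q$ with stationary distribution $\pi$, $Q^\star Q$ is self-adjoint in $\ell_2(\pi)$ (inner product $\sum_x f(x)g(x)\pi(x)$) with real eigenvalues $1=\lambda_1\ge\lambda_2\ge\dots\ge 0$ counted with multiplicity, and $\gamma_\dagger(Q)\doteq 1-\lambda_2(Q^\star Q)$. The pseudo-spectral gap is $\gamma_{\mathsf{ps}}(P)=\max_{k\ge 1}\gamma_\dagger(P^k)/k$ (a maximum which is attained and positive for ergodic $P$); $\gamma_{\mathsf{ps}}=\gamma_{\mathsf{ps}}(P)$, $k_{\mathsf{ps}}$ is the smallest integer $k$ with $\gamma_{\mathsf{ps}}=\gamma_\dagger(P^{k})/k$, and $\gamma^{(p)}_{\mathsf{ps}}\doteq\gamma_{\mathsf{ps}}(P^p)$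 is the pseudo-spectral gap of the $p$-skipped chain with transition matrix $P^p$. *)

theory Defs
  imports "Jordan_Normal_Form.Char_Poly"
begin

definition row_stochastic :: "nat \<Rightarrow> real mat \<Rightarrow> bool" where
  "row_stochastic n P \<longleftrightarrow> P \<in> carrier_mat n n \<and>
     (\<forall>i<n. \<forall>j<n. P $$ (i,j) \<ge> 0) \<and> (\<forall>i<n. (\<Sum>j<n. P $$ (i,j)) = 1)"

text \<open>Ergodic = primitive: some power has all entries strictly positive.\<close>
definition primitive :: "nat \<Rightarrow> real mat \<Rightarrow> bool" where
  "primitive n P \<longleftrightarrow> (\<exists>k. \<forall>i<n. \<forall>j<n. (P ^\<^sub>m k) $$ (i,j) > 0)"

definition stationary_dist :: "nat \<Rightarrow> real mat \<Rightarrow> (nat \<Rightarrow> real) \<Rightarrow> bool" where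
  "stationary_dist n P \<pi> \<longleftrightarrow> (\<forall>i<n. \<pi> i > 0) \<and> (\<Sum>i<n. \<pi> i) = 1 \<and>
     (\<forall>j<n. (\<Sum>i<n. \<pi> i * P $$ (i,j)) = \<pi> j)"

definition time_reversal :: "nat \<Rightarrow> (nat \<Rightarrow> real) \<Rightarrow> real mat \<Rightarrow> real mat" where
  "time_reversal n \<pi> Q = mat n n (\<lambda>(x,x'). \<pi> x' * Q $$ (x',x) / \<pi> x)"

text \<open>Eigenvalues counted with multiplicity = real roots of the characteristic polynomial
  counted with their root multiplicity.  lambda2 M is the second largest eigenvalue
  (with multiplicity) in the list 1 = lambda_1 >= lambda_2 >= ...; for a 1 x 1 matrix
  (no second eigenvalue) the list is padded with 0.\<close>
definition eig_count_ge :: "real mat \<Rightarrow> real \<Rightarrow> nat" where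
  "eig_count_ge M t = (\<Sum>r\<in>{r. poly (char_poly M) r = 0 \<and> r \<ge> t}. order r (char_poly M))"

definition lambda2 :: "real mat \<Rightarrow> real" where
  "lambda2 M = (let S = {t. poly (char_poly M) t = 0 \<and> eig_count_ge M t \<ge> 2}
                in if S = {} then 0 else Max S)"

definition gamma_dagger :: "nat \<Rightarrow> (nat \<Rightarrow> real) \<Rightarrow> real mat \<Rightarrow> real" where
  "gamma_dagger n \<pi> Q = 1 - lambda2 (time_reversal n \<pi> Q * Q)"

text \<open>Pseudo-spectral gap: max over k >= 1 of gamma_dagger(Q^k)/k (the max is attained).\<close>
definition gamma_ps :: "nat \<Rightarrow> (nat \<Rightarrow> real) \<Rightarrow> real mat \<Rightarrow> real" where
  "gamma_ps n \<pi> Q = (SUP k\<in>{1..}. gamma_dagger n \<pi> (Q ^\<^sub>m k) / real k)"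

definition k_ps :: "nat \<Rightarrow> (nat \<Rightarrow> real) \<Rightarrow> real mat \<Rightarrow> nat" where
  "k_ps n \<pi> Q = (LEAST k. k \<ge> 1 \<and> gamma_ps n \<pi> Q = gamma_dagger n \<pi> (Q ^\<^sub>m k) / real k)"

end

theory Submission
  imports Defs "Jordan_Normal_Form.Schur_Decomposition"
begin


definition ip :: "nat \<Rightarrow> (nat \<Rightarrow> real) \<Rightarrow> (nat \<Rightarrow> real) \<Rightarrow> real" where
  "ip n x y = (\<Sum>i<n. x i * y i)"
definition mv :: "nat \<Rightarrow> real mat \<Rightarrow> (nat \<Rightarrow> real) \<Rightarrow> (nat \<Rightarrow> real)" where
  "mv n A x = (\<lambda>i. \<Sum>j<n. A $$ (i,j) * x j)"
definition symm :: "nat \<Rightarrow> real mat \<Rightarrow> bool" where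
  "symm n A \<longleftrightarrow> (\<forall>i<n. \<forall>j<n. A $$ (i,j) = A $$ (j,i))"
definition tr :: "nat \<Rightarrow> 'a::comm_ring_1 mat \<Rightarrow> 'a" where
  "tr n X = (\<Sum>i<n. X $$ (i,i))"

lemma ip_comm: "ip n x y = ip n y x"
  unfolding ip_def by (simp add: mult.commute)

lemma ip_self_ge0: "ip n x x \<ge> 0"
  unfolding ip_def by (intro sum_nonneg) auto

lemma ip_self_eq0: "ip n x x = 0 \<Longrightarrow> i < n \<Longrightarrow> x i = 0"
  unfolding ip_def by (subst (asm) sum_nonneg_eq_0_iff) auto

lemma ip_self_pos: "i < n \<Longrightarrow> x i \<noteq> 0 \<Longrightarrow> ip n x x > 0"
  using ip_self_ge0[of n x] ip_self_eq0[of n x i] by linarith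

lemma mult_mat_entry: "A \<in> carrier_mat n n \<Longrightarrow> B \<in> carrier_mat n n \<Longrightarrow> i < n \<Longrightarrow> j < n \<Longrightarrow>
  (A * B) $$ (i,j) = (\<Sum>k<n. A $$ (i,k) * B $$ (k,j))"
  by (simp add: scalar_prod_def lessThan_atLeast0)

lemma tr_comm: assumes "X \<in> carrier_mat n n" "Y \<in> carrier_mat n n"
  shows "tr n (X * Y) = tr n (Y * X)"
proof -
  have "tr n (X * Y) = (\<Sum>i<n. \<Sum>k<n. X $$ (i,k) * Y $$ (k,i))"
    unfolding tr_def by (intro sum.cong) (auto simp: mult_mat_entry[OF assms])
  also have "\<dots> = (\<Sum>k<n. \<Sum>i<n. Y $$ (k,i) * X $$ (i,k))"
    by (subst sum.swap) (simp add: mult.commute)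
  also have "\<dots> = tr n (Y * X)"
    unfolding tr_def by (intro sum.cong) (auto simp: mult_mat_entry[OF assms(2,1)])
  finally show ?thesis .
qed

lemma mv_mult: assumes "A \<in> carrier_mat n n" "B \<in> carrier_mat n n" "i < n"
  shows "mv n (A * B) x i = mv n A (mv n B x) i"
proof -
  have "mv n (A * B) x i = (\<Sum>j<n. \<Sum>k<n. A $$ (i,k) * B $$ (k,j) * x j)"
    unfolding mv_def using assms by (auto simp del: index_mult_mat simp: mult_mat_entry[OF assms(1,2) assms(3)] sum_distrib_right intro!: sum.cong)
  also have "\<dots> = (\<Sum>k<n. \<Sum>j<n. A $$ (i,k) * (B $$ (k,j) * x j))"
    by (subst sum.swap) (simp add: mult.assoc)
  also have "\<dots> = mv n A (mv n B x) i"
    unfolding mv_def by (simp add: sum_distrib_left)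
  finally show ?thesis .
qed

lemma mv_cong: "(\<And>j. j < n \<Longrightarrow> x j = y j) \<Longrightarrow> mv n A x i = mv n A y i"
  unfolding mv_def by (auto intro!: sum.cong)

lemma ip_cong: "(\<And>j. j < n \<Longrightarrow> x j = x' j) \<Longrightarrow> (\<And>j. j < n \<Longrightarrow> y j = y' j) \<Longrightarrow> ip n x y = ip n x' y'"
  unfolding ip_def by (auto intro!: sum.cong)

lemma ip_mv_transpose: assumes "A \<in> carrier_mat n n"
  shows "ip n (mv n (transpose_mat A) y) z = ip n y (mv n A z)"
proof -
  have "ip n (mv n (transpose_mat A) y) z = (\<Sum>i<n. \<Sum>j<n. A $$ (j,i) * y j * z i)"
    unfolding ip_def mv_def using assms by (auto simp: sum_distrib_right intro!: sum.cong)
  also have "\<dots> = (\<Sum>j<n. \<Sum>i<n. y j * (A $$ (j,i) * z i))"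
    by (subst sum.swap) (simp add: ac_simps)
  also have "\<dots> = ip n y (mv n A z)"
    unfolding ip_def mv_def by (simp add: sum_distrib_left)
  finally show ?thesis .
qed

lemma ip_mv_symm: assumes "symm n A"
  shows "ip n (mv n A y) z = ip n y (mv n A z)"
proof -
  have "ip n (mv n A y) z = (\<Sum>i<n. \<Sum>j<n. A $$ (j,i) * y j * z i)"
    unfolding ip_def mv_def using assms by (auto simp: sum_distrib_right symm_def intro!: sum.cong)
  also have "\<dots> = (\<Sum>j<n. \<Sum>i<n. y j * (A $$ (j,i) * z i))"
    by (subst sum.swap) (simp add: ac_simps)
  also have "\<dots> = ip n y (mv n A z)"
    unfolding ip_def mv_def by (simp add: sum_distrib_left)
  finally show ?thesis .
qed

lemma complex_eig_real:
  assumes A: "A \<in> carrier_mat n n" and S: "symm n A"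
    and ev: "eigenvector (map_mat complex_of_real A) v a"
  shows "Im a = 0"
proof -
  let ?Ac = "map_mat complex_of_real A"
  from ev A have v: "v \<in> carrier_vec n" "v \<noteq> 0\<^sub>v n" "?Ac *\<^sub>v v = a \<cdot>\<^sub>v v"
    unfolding eigenvector_def by auto
  have Av: "(\<Sum>j<n. complex_of_real (A $$ (i,j)) * v $ j) = a * v $ i" if "i < n" for i
  proof -
    have "(?Ac *\<^sub>v v) $ i = a * v $ i" using v that by simp
    thus ?thesis using that A v(1) by (simp add: scalar_prod_def lessThan_atLeast0)
  qed
  define S where "S = (\<Sum>i<n. \<Sum>j<n. cnj (v $ i) * complex_of_real (A $$ (i,j)) * v $ j)"
  define s where "s = (\<Sum>i<n. cnj (v $ i) * v $ i)"
  have S1: "S = a * s"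
  proof -
    have "S = (\<Sum>i<n. cnj (v $ i) * (\<Sum>j<n. complex_of_real (A $$ (i,j)) * v $ j))"
      unfolding S_def by (simp add: sum_distrib_left mult.assoc)
    also have "\<dots> = (\<Sum>i<n. a * (cnj (v $ i) * v $ i))"
      by (intro sum.cong) (auto simp: Av)
    finally show ?thesis unfolding s_def by (simp add: sum_distrib_left)
  qed
  have S2: "cnj S = S"
  proof -
    have "cnj S = (\<Sum>i<n. \<Sum>j<n. v $ i * complex_of_real (A $$ (i,j)) * cnj (v $ j))"
      unfolding S_def by simp
    also have "\<dots> = (\<Sum>j<n. \<Sum>i<n. v $ i * complex_of_real (A $$ (i,j)) * cnj (v $ j))"
      by (rule sum.swap)
    also have "\<dots> = S" unfolding S_def
      using S by (auto simp: symm_def ac_simps intro!: sum.cong)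
    finally show ?thesis .
  qed
  have s1: "cnj s = s" unfolding s_def by (simp add: mult.commute)
  from v obtain i where i: "i < n" "v $ i \<noteq> 0" by (metis eq_vecI carrier_vecD index_zero_vec(1,2))
  have "Re s > 0"
  proof -
    have "Re s = (\<Sum>i<n. (Re (v $ i))^2 + (Im (v $ i))^2)"
      unfolding s_def by (simp add: Re_sum power2_eq_square)
    also have "\<dots> > 0"
    proof (rule sum_pos2[of _ i])
      show "(Re (v $ i))^2 + (Im (v $ i))^2 > 0" using i(2)
        by (metis add_nonneg_pos complex_eq_iff sum_power2_gt_zero_iff zero_complex.simps)
    qed (use i in auto)
    finally show ?thesis .
  qed
  hence s0: "s \<noteq> 0" by auto
  have "cnj a * s = a * s" using S1 S2 s1 by (metis complex_cnj_mult)
  hence "cnj a = a" using s0 by simp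
  thus ?thesis by (metis complex_cnj_cancel_iff complex_eq_iff cnj.simps(2) neg_equal_zero)
qed


lemma tr_upper_sq0: assumes B: "B \<in> carrier_mat n n" and ut: "upper_triangular B"
  and d: "\<And>i. i < n \<Longrightarrow> B $$ (i,i) = 0"
  shows "tr n (B * B) = 0"
proof -
  have "(B * B) $$ (i,i) = 0" if i: "i < n" for i
  proof -
    have "(B * B) $$ (i,i) = (\<Sum>k<n. B $$ (i,k) * B $$ (k,i))" using mult_mat_entry[OF B B i i] .
    also have "\<dots> = 0"
    proof (intro sum.neutral ballI)
      fix k assume k: "k \<in> {..<n}"
      consider "k < i" | "k = i" | "i < k" by linarith
      thus "B $$ (i,k) * B $$ (k,i) = 0"
        using ut B k i d unfolding upper_triangular_def by cases auto
    qed
    finally show ?thesis .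
  qed
  thus ?thesis unfolding tr_def by simp
qed

lemma symm_nonzero_eig:
  assumes A: "A \<in> carrier_mat n n" and S: "symm n A" and nz: "i0 < n" "j0 < n" "A $$ (i0,j0) \<noteq> 0"
  shows "\<exists>r x. r \<noteq> 0 \<and> ip n x x \<noteq> 0 \<and> (\<forall>a<n. mv n A x a = r * x a)"
proof -
  let ?Ac = "map_mat complex_of_real A"
  have Ac: "?Ac \<in> carrier_mat n n" using A by simp
  obtain as where cp: "char_poly ?Ac = (\<Prod>a\<leftarrow>as. [:- a, 1:])" and len: "length as = n"
    using char_poly_factorized[OF Ac] by blast
  have cpr: "char_poly ?Ac = map_poly of_real (char_poly A)"
    using of_real_hom.char_poly_hom[OF A] by simp
  have real: "Im a = 0" if a: "a \<in> set as" for a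
  proof -
    have "poly (char_poly ?Ac) a = 0" using a by (simp add: cp linear_poly_root)
    hence "eigenvalue ?Ac a" using eigenvalue_root_char_poly[OF Ac] by simp
    then obtain v where "eigenvector ?Ac v a" unfolding eigenvalue_def by blast
    from complex_eig_real[OF A S this] show ?thesis .
  qed
  show ?thesis
  proof (cases "\<exists>a\<in>set as. a \<noteq> 0")
    case True
    then obtain a where a: "a \<in> set as" "a \<noteq> 0" by blast
    define r where "r = Re a"
    have ar: "a = complex_of_real r" using real[OF a(1)] unfolding r_def by (simp add: complex_eq_iff)
    have "poly (char_poly ?Ac) a = 0" using a by (simp add: cp linear_poly_root)
    hence "complex_of_real (poly (char_poly A) r) = 0"
      unfolding cpr ar of_real_hom.poly_map_poly .
    hence "poly (char_poly A) r = 0" by simp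
    hence "eigenvalue A r" using eigenvalue_root_char_poly[OF A] by simp
    then obtain w where w: "eigenvector A w r" unfolding eigenvalue_def by blast
    hence w1: "w \<in> carrier_vec n" "w \<noteq> 0\<^sub>v n" "A *\<^sub>v w = r \<cdot>\<^sub>v w"
      using A unfolding eigenvector_def by auto
    from w1 obtain i where i: "i < n" "w $ i \<noteq> 0" by (metis eq_vecI carrier_vecD index_zero_vec(1,2))
    define x where "x = (\<lambda>i. w $ i)"
    have "ip n x x > 0" using ip_self_pos[of i n x] i unfolding x_def by simp
    moreover have "mv n A x b = r * x b" if b: "b < n" for b
    proof -
      have "(A *\<^sub>v w) $ b = r * w $ b" using w1 b by simp
      thus ?thesis using b A w1(1) unfolding mv_def x_def by (simp add: scalar_prod_def lessThan_atLeast0)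
    qed
    moreover have "r \<noteq> 0" using a ar by simp
    ultimately show ?thesis by (intro exI[of _ r] exI[of _ x]) auto
  next
    case False
    interpret rp: map_poly_inj_comm_ring_hom "complex_of_real" by unfold_locales auto
    from False have "as = replicate n 0" using len by (metis replicate_length_same)
    hence "char_poly ?Ac = [:0, 1:] ^ n" unfolding cp by (simp add: prod_list_replicate)
    also have "\<dots> = map_poly of_real ([:0,1:] ^ n)" by (simp add: rp.hom_power)
    finally have "map_poly complex_of_real (char_poly A) = map_poly of_real ([:0,1:] ^ n)"
      unfolding cpr .
    hence "char_poly A = [:0,1:] ^ n" using rp.eq_iff by blast
    hence cpA: "char_poly A = (\<Prod>e\<leftarrow>replicate n (0::real). [:- e, 1:])"
      by (simp add: prod_list_replicate)
    obtain B P Q where sd: "schur_decomposition A (replicate n 0) = (B,P,Q)"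
      by (cases "schur_decomposition A (replicate n 0)") auto
    from schur_decomposition[OF A cpA sd]
    have sim: "similar_mat_wit A B P Q" and ut: "upper_triangular B" and dg: "diag_mat B = replicate n 0"
      by auto
    from sim A have car: "B \<in> carrier_mat n n" "P \<in> carrier_mat n n" "Q \<in> carrier_mat n n"
      and QP: "Q * P = 1\<^sub>m n"
      unfolding similar_mat_wit_def Let_def by auto
    have Bd: "B $$ (i,i) = 0" if "i < n" for i
    proof -
      have "diag_mat B ! i = 0" using dg that by simp
      thus ?thesis using that car(1) unfolding diag_mat_def by simp
    qed
    have A2: "A ^\<^sub>m 2 = P * (B ^\<^sub>m 2) * Q" using similar_mat_wit_pow_id[OF sim] .
    have AA: "A ^\<^sub>m 2 = A * A" using A by (simp add: numeral_2_eq_2)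
    have BB: "B ^\<^sub>m 2 = B * B" using car by (simp add: numeral_2_eq_2)
    have "tr n (A * A) = tr n (P * (B * B) * Q)" using A2 AA BB by simp
    also have "\<dots> = tr n (Q * (P * (B * B)))"
      by (rule tr_comm) (use car in auto)
    also have "Q * (P * (B * B)) = (Q * P) * (B * B)"
      using car by (simp add: assoc_mult_mat[of Q n n P n "B*B" n])
    also have "\<dots> = B * B" using QP car by simp
    finally have "tr n (A * A) = 0" using tr_upper_sq0[OF car(1) ut Bd] by simp
    moreover have "tr n (A * A) = (\<Sum>i<n. \<Sum>k<n. (A $$ (i,k))^2)"
      unfolding tr_def using S
      by (intro sum.cong refl) (auto simp: mult_mat_entry[OF A A] symm_def power2_eq_square)
    ultimately have "(\<Sum>i<n. \<Sum>k<n. (A $$ (i,k))^2) = 0" by simp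
    hence "(\<Sum>k<n. (A $$ (i0,k))^2) = 0" using nz
      by (subst (asm) sum_nonneg_eq_0_iff) (auto intro: sum_nonneg)
    hence "(A $$ (i0,j0))^2 = 0" using nz by (subst (asm) sum_nonneg_eq_0_iff) auto
    thus ?thesis using nz by simp
  qed
qed


lemma exists_orth: assumes k: "k < n"
  shows "\<exists>x. ip n x x \<noteq> 0 \<and> (\<forall>i<k. ip n (v i) x = 0)"
proof -
  define c where "c = (\<lambda>i. vec n (\<lambda>j. if i < k then v i j else (0::real)))"
  define B where "B = mat\<^sub>r n n (\<lambda>i. if i = n - 1 then 0\<^sub>v n else c i)"
  have "det B = 0" unfolding B_def by (rule det_row_0) (use k in \<open>auto simp: c_def\<close>)
  moreover have B: "B \<in> carrier_mat n n" unfolding B_def by simp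
  ultimately obtain y where y: "y \<in> carrier_vec n" "y \<noteq> 0\<^sub>v n" "B *\<^sub>v y = 0\<^sub>v n"
    using det_0_iff_vec_prod_zero_field[OF B] by blast
  from y obtain i where i: "i < n" "y $ i \<noteq> 0" by (metis eq_vecI carrier_vecD index_zero_vec(1,2))
  define x where "x = (\<lambda>i. y $ i)"
  have "ip n x x > 0" using ip_self_pos[of i n x] i unfolding x_def by simp
  moreover have "ip n (v j) x = 0" if j: "j < k" for j
  proof -
    have jn: "j < n" "j \<noteq> n - 1" using j k by auto
    have "(B *\<^sub>v y) $ j = 0" using y(3) jn by simp
    moreover have "(B *\<^sub>v y) $ j = (\<Sum>a<n. v j a * y $ a)"
      using jn j y(1) unfolding B_def c_def
      by (simp add: scalar_prod_def lessThan_atLeast0 mat_of_rows_def row_def)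
    ultimately show ?thesis unfolding ip_def x_def by simp
  qed
  ultimately show ?thesis by (intro exI[of _ x]) auto
qed

lemma symm_transpose: "A \<in> carrier_mat n n \<Longrightarrow> symm n A \<longleftrightarrow> transpose_mat A = A"
  unfolding symm_def by (auto simp: eq_matI mat_eq_iff)

lemma spectral_step:
  assumes A: "A \<in> carrier_mat n n" and S: "symm n A" and k: "k < n"
    and orth: "\<And>i j. i < k \<Longrightarrow> j < k \<Longrightarrow> ip n (v i) (v j) = (if i = j then 1 else 0)"
    and eig: "\<And>i a. i < k \<Longrightarrow> a < n \<Longrightarrow> mv n A (v i) a = d i * v i a"
  shows "\<exists>w r. ip n w w = 1 \<and> (\<forall>i<k. ip n (v i) w = 0) \<and> (\<forall>a<n. mv n A w a = r * w a)"
proof -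
  define pr where "pr = (\<lambda>x a. x a - (\<Sum>i<k. ip n (v i) x * v i a))"
  define Pm where "Pm = mat n n (\<lambda>(a,b). (if a = b then 1 else 0) - (\<Sum>i<k. v i a * v i b))"
  have Pm: "Pm \<in> carrier_mat n n" unfolding Pm_def by simp
  have PmS: "symm n Pm" unfolding Pm_def symm_def by (auto simp: mult.commute)
  have mvPm: "mv n Pm x a = pr x a" if "a < n" for x a
  proof -
    have "mv n Pm x a = (\<Sum>b<n. (if a = b then 1 else 0) * x b) - (\<Sum>b<n. \<Sum>i<k. v i a * v i b * x b)"
      unfolding mv_def Pm_def using that
      by (simp add: sum_subtractf left_diff_distrib sum_distrib_right)
    also have "(\<Sum>b<n. (if a = b then 1 else 0) * x b) = x a" using that
      by (simp add: if_distrib[of "\<lambda>t. t * _"] sum.delta cong: if_cong)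
    also have "(\<Sum>b<n. \<Sum>i<k. v i a * v i b * x b) = (\<Sum>i<k. ip n (v i) x * v i a)"
      unfolding ip_def by (subst sum.swap) (simp add: sum_distrib_left sum_distrib_right ac_simps)
    finally show ?thesis unfolding pr_def .
  qed
  have pr_orth: "ip n (v j) (pr x) = 0" if j: "j < k" for j x
  proof -
    have "ip n (v j) (pr x) = ip n (v j) x - (\<Sum>a<n. \<Sum>i<k. v j a * (ip n (v i) x * v i a))"
      unfolding pr_def ip_def by (simp add: right_diff_distrib sum_subtractf sum_distrib_left)
    also have "(\<Sum>a<n. \<Sum>i<k. v j a * (ip n (v i) x * v i a)) = (\<Sum>i<k. \<Sum>a<n. v j a * (ip n (v i) x * v i a))"
      by (rule sum.swap)
    also have "\<dots> = (\<Sum>i<k. ip n (v i) x * ip n (v j) (v i))"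
      unfolding ip_def by (simp add: sum_distrib_left ac_simps)
    also have "(\<Sum>i<k. ip n (v i) x * ip n (v j) (v i)) = ip n (v j) x"
      using j by (simp add: orth if_distrib[of "\<lambda>t. _ * t"] sum.delta cong: if_cong)
    finally show ?thesis by simp
  qed
  have pr_cong: "pr f a = pr g a" if "\<And>b. b < n \<Longrightarrow> f b = g b" "a < n" for f g a
    unfolding pr_def using that by (simp add: ip_cong[of n _ _ f g])
  have pr_id: "pr x a = x a" if "\<forall>j<k. ip n (v j) x = 0" for x a
    unfolding pr_def using that by simp
  have A_orth: "ip n (v j) (mv n A w) = 0" if j: "j < k" and w: "\<forall>j<k. ip n (v j) w = 0" for j w
  proof -
    have "ip n (v j) (mv n A w) = ip n (mv n A (v j)) w" using ip_mv_symm[OF S] by simp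
    also have "\<dots> = ip n (\<lambda>a. d j * v j a) w" by (rule ip_cong) (use eig j in auto)
    also have "\<dots> = d j * ip n (v j) w" unfolding ip_def by (simp add: sum_distrib_left ac_simps)
    finally show ?thesis using w j by simp
  qed
  define A' where "A' = Pm * A * Pm"
  have A': "A' \<in> carrier_mat n n" unfolding A'_def using Pm A by simp
  have A'S: "symm n A'"
  proof -
    have "transpose_mat A' = transpose_mat Pm * transpose_mat A * transpose_mat Pm"
      unfolding A'_def using Pm A
      by (simp add: transpose_mult[of Pm n n "A * Pm" n] transpose_mult[of A n n Pm n] assoc_mult_mat[of _ n n _ n _ n])
    also have "\<dots> = A'" unfolding A'_def
      using symm_transpose[OF Pm] symm_transpose[OF A] PmS S by simp
    finally show ?thesis using symm_transpose[OF A'] by simp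
  qed
  have mvA': "mv n A' x a = pr (mv n A (pr x)) a" if a: "a < n" for x a
  proof -
    have "mv n A' x a = mv n Pm (mv n (A * Pm) x) a"
      unfolding A'_def using Pm A a by (simp add: mv_mult[of Pm n "A * Pm"] assoc_mult_mat[of _ n n _ n _ n])
    also have "\<dots> = pr (mv n (A * Pm) x) a" using mvPm a by simp
    also have "\<dots> = pr (mv n A (pr x)) a"
    proof (rule pr_cong[OF _ a])
      fix b assume b: "b < n"
      have "mv n (A * Pm) x b = mv n A (mv n Pm x) b" by (rule mv_mult[OF A Pm b])
      also have "\<dots> = mv n A (pr x) b" by (rule mv_cong) (simp add: mvPm)
      finally show "mv n (A * Pm) x b = mv n A (pr x) b" .
    qed
    finally show ?thesis .
  qed
  have mvA'_orth: "mv n A' x a = mv n A x a" if a: "a < n" and x: "\<forall>j<k. ip n (v j) x = 0" for x a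
  proof -
    have "mv n A' x a = pr (mv n A (pr x)) a" by (rule mvA'[OF a])
    also have "\<dots> = pr (mv n A x) a" by (rule pr_cong[OF _ a], rule mv_cong) (use pr_id x in auto)
    also have "pr (mv n A x) a = mv n A x a" by (rule pr_id) (use A_orth x in auto)
    finally show ?thesis .
  qed
  have "\<exists>x r. ip n x x \<noteq> 0 \<and> (\<forall>j<k. ip n (v j) x = 0) \<and> (\<forall>a<n. mv n A x a = r * x a)"
  proof (cases "\<exists>i<n. \<exists>j<n. A' $$ (i,j) \<noteq> 0")
    case True
    then obtain i j where ij: "i < n" "j < n" "A' $$ (i,j) \<noteq> 0" by blast
    from symm_nonzero_eig[OF A' A'S ij] obtain r x where
      rx: "r \<noteq> 0" "ip n x x \<noteq> 0" "\<forall>a<n. mv n A' x a = r * x a" by blast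
    have xo: "ip n (v j) x = 0" if j: "j < k" for j
    proof -
      have "ip n (v j) x = ip n (v j) (\<lambda>a. pr (mv n A (pr x)) a / r)"
        by (rule ip_cong) (use rx mvA' in auto)
      also have "\<dots> = ip n (v j) (pr (mv n A (pr x))) / r"
        unfolding ip_def by (simp add: sum_divide_distrib)
      finally show ?thesis using pr_orth[OF j] by simp
    qed
    have "mv n A x a = r * x a" if "a < n" for a using mvA'_orth[of a x] xo rx that by simp
    thus ?thesis using xo rx by blast
  next
    case False
    obtain x where x: "ip n x x \<noteq> 0" "\<forall>i<k. ip n (v i) x = 0" using exists_orth[OF k] by blast
    have "mv n A x a = 0 * x a" if a: "a < n" for a
    proof -
      have "mv n A' x a = 0" unfolding mv_def using False a by simp
      thus ?thesis using mvA'_orth[OF a] x by simp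
    qed
    thus ?thesis using x by blast
  qed
  then obtain x r where x: "ip n x x \<noteq> 0" "\<forall>j<k. ip n (v j) x = 0" "\<forall>a<n. mv n A x a = r * x a"
    by blast
  define c where "c = sqrt (ip n x x)"
  have c: "c > 0" unfolding c_def using x(1) ip_self_ge0[of n x] by simp
  define w where "w = (\<lambda>a. x a / c)"
  have "ip n w w = ip n x x / c^2" unfolding ip_def w_def by (simp add: sum_divide_distrib power2_eq_square)
  also have "\<dots> = 1" unfolding c_def using x(1) ip_self_ge0[of n x] by simp
  finally have "ip n w w = 1" .
  moreover have "ip n (v j) w = 0" if "j < k" for j
    unfolding w_def ip_def using x(2) that by (simp add: ip_def sum_divide_distrib[symmetric])
  moreover have "mv n A w a = r * w a" if "a < n" for a
    unfolding w_def mv_def using x(3) that by (simp add: mv_def sum_divide_distrib[symmetric])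
  ultimately show ?thesis by blast
qed


lemma spectral_k:
  assumes A: "A \<in> carrier_mat n n" and S: "symm n A"
  shows "k \<le> n \<Longrightarrow> \<exists>v d. (\<forall>i<k. \<forall>j<k. ip n (v i) (v j) = (if i = j then 1 else 0)) \<and>
      (\<forall>i<k. \<forall>a<n. mv n A (v i) a = d i * v i a)"
proof (induction k)
  case 0 show ?case by simp
next
  case (Suc k)
  then obtain v d where orth: "\<forall>i<k. \<forall>j<k. ip n (v i) (v j) = (if i = j then 1 else 0)"
    and eig: "\<forall>i<k. \<forall>a<n. mv n A (v i) a = d i * v i a" by auto
  from spectral_step[OF A S _ , of k v d] Suc.prems orth eig obtain w r where
    w: "ip n w w = 1" "\<forall>i<k. ip n (v i) w = 0" "\<forall>a<n. mv n A w a = r * w a" by auto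
  define v' where "v' = v(k := w)"
  define d' where "d' = d(k := r)"
  have "ip n (v' i) (v' j) = (if i = j then 1 else 0)" if "i < Suc k" "j < Suc k" for i j
    using that orth w unfolding v'_def by (cases "i = k"; cases "j = k") (auto simp: ip_comm)
  moreover have "mv n A (v' i) a = d' i * v' i a" if "i < Suc k" "a < n" for i a
    using that eig w unfolding v'_def d'_def by (cases "i = k") auto
  ultimately show ?case by blast
qed

theorem spectral:
  assumes A: "A \<in> carrier_mat n n" and S: "symm n A"
  shows "\<exists>v d. (\<forall>i<n. \<forall>j<n. ip n (v i) (v j) = (if i = j then 1 else 0)) \<and>
      (\<forall>i<n. \<forall>a<n. mv n A (v i) a = d i * v i a) \<and>
      (\<forall>a<n. \<forall>b<n. (\<Sum>i<n. v i a * v i b) = (if a = b then 1 else 0)) \<and>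
      char_poly A = (\<Prod>i\<leftarrow>[0..<n]. [:- d i, 1:])"
proof -
  obtain v d where orth: "\<forall>i<n. \<forall>j<n. ip n (v i) (v j) = (if i = j then 1 else 0)"
    and eig: "\<forall>i<n. \<forall>a<n. mv n A (v i) a = d i * v i a"
    using spectral_k[OF A S, of n] by auto
  define U where "U = mat n n (\<lambda>(a,i). v i a)"
  define D where "D = mat n n (\<lambda>(i,j). if i = j then d i else 0)"
  have U: "U \<in> carrier_mat n n" and UT: "transpose_mat U \<in> carrier_mat n n"
    and D: "D \<in> carrier_mat n n" unfolding U_def D_def by auto
  have UTU: "transpose_mat U * U = 1\<^sub>m n"
  proof (rule eq_matI)
    fix i j assume ij: "i < dim_row (1\<^sub>m n)" "j < dim_col (1\<^sub>m n)"
    hence "(transpose_mat U * U) $$ (i,j) = ip n (v i) (v j)"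
      unfolding ip_def by (subst mult_mat_entry[OF UT U]) (auto simp: U_def)
    thus "(transpose_mat U * U) $$ (i,j) = 1\<^sub>m n $$ (i,j)" using orth ij by simp
  qed (use U in auto)
  have UUT: "U * transpose_mat U = 1\<^sub>m n" by (rule mat_mult_left_right_inverse[OF UT U UTU])
  have compl: "(\<Sum>i<n. v i a * v i b) = (if a = b then 1 else 0)" if "a < n" "b < n" for a b
  proof -
    have "(U * transpose_mat U) $$ (a,b) = (\<Sum>i<n. v i a * v i b)"
      using that by (subst mult_mat_entry[OF U UT]) (auto simp: U_def)
    thus ?thesis using UUT that by simp
  qed
  have AU: "A * U = U * D"
  proof (rule eq_matI)
    fix a i assume ai: "a < dim_row (U * D)" "i < dim_col (U * D)"
    hence ai': "a < n" "i < n" using U D by auto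
    have "(A * U) $$ (a,i) = mv n A (v i) a"
      using ai' unfolding mv_def by (subst mult_mat_entry[OF A U]) (auto simp: U_def)
    also have "\<dots> = d i * v i a" using eig ai' by simp
    also have "\<dots> = (U * D) $$ (a,i)"
      using ai' by (subst mult_mat_entry[OF U D]) (auto simp: U_def D_def if_distrib[of "\<lambda>t. _ * t"] sum.delta cong: if_cong)
    finally show "(A * U) $$ (a,i) = (U * D) $$ (a,i)" .
  qed (use A U D in auto)
  have "A = A * (U * transpose_mat U)" using A UUT by simp
  also have "\<dots> = (A * U) * transpose_mat U" using A U UT by (simp add: assoc_mult_mat[of A n n U n _ n])
  also have "\<dots> = U * D * transpose_mat U" unfolding AU ..
  finally have "similar_mat_wit A D U (transpose_mat U)"
    unfolding similar_mat_wit_def Let_def using A U UT D UUT UTU by auto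
  hence "similar_mat A D" unfolding similar_mat_def by blast
  hence "char_poly A = char_poly D" by (rule char_poly_similar)
  also have "\<dots> = (\<Prod>a\<leftarrow>diag_mat D. [:- a, 1:])"
    by (rule char_poly_upper_triangular[OF D]) (auto simp: upper_triangular_def D_def)
  also have "diag_mat D = map d [0..<n]" unfolding diag_mat_def D_def by auto
  finally have "char_poly A = (\<Prod>i\<leftarrow>[0..<n]. [:- d i, 1:])" by (simp add: o_def)
  thus ?thesis using orth eig compl by blast
qed




lemma order_prod_lin: "Polynomial.order r (\<Prod>i\<leftarrow>xs. [:- (d i :: real), 1:]) = length (filter (\<lambda>i. d i = r) xs)"
proof (induction xs)
  case Nil show ?case by (simp add: order_0I)
next
  case (Cons x xs)
  have nz: "(\<Prod>i\<leftarrow>xs. [:- d i, 1:]) \<noteq> 0" by (auto simp: prod_list_zero_iff)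
  have eq: "(\<Prod>i\<leftarrow>x#xs. [:- d i, 1:]) = [:- d x, 1:] * (\<Prod>i\<leftarrow>xs. [:- d i, 1:])" by simp
  have ne: "[:- d x, 1:] * (\<Prod>i\<leftarrow>xs. [:- d i, 1:]) \<noteq> 0"
    using nz by (metis mult_eq_0_iff pCons_eq_0_iff one_neq_zero)
  show ?case unfolding eq order_mult[OF ne] Cons.IH order_linear' by simp
qed

lemma poly_prod_lin: "poly (\<Prod>i\<leftarrow>[0..<n]. [:- (d i :: real), 1:]) t = 0 \<longleftrightarrow> (\<exists>i<n. d i = t)"
  by (auto simp: poly_prod_list_zero_iff)

lemma eig_count_ge_eq:
  assumes cp: "char_poly M = (\<Prod>i\<leftarrow>[0..<n]. [:- d i, 1:])"
  shows "eig_count_ge M t = card {i. i < n \<and> t \<le> d i}"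
proof -
  define I where "I = {i. i < n \<and> t \<le> d i}"
  have fin: "finite I" unfolding I_def by auto
  have R: "{r. poly (char_poly M) r = 0 \<and> r \<ge> t} = d ` I"
    unfolding cp poly_prod_lin I_def by auto
  have "eig_count_ge M t = (\<Sum>r\<in>d ` I. Polynomial.order r (char_poly M))"
    unfolding eig_count_ge_def R ..
  also have "\<dots> = (\<Sum>r\<in>d ` I. card {i\<in>I. d i = r})"
  proof (rule sum.cong[OF refl])
    fix r assume r: "r \<in> d ` I"
    have "Polynomial.order r (char_poly M) = length (filter (\<lambda>i. d i = r) [0..<n])"
      unfolding cp order_prod_lin ..
    also have "\<dots> = card {i. i < n \<and> d i = r}" unfolding length_filter_conv_card
      by (rule arg_cong[where f=card]) auto
    also have "{i. i < n \<and> d i = r} = {i\<in>I. d i = r}" using r unfolding I_def by auto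
    finally show "Polynomial.order r (char_poly M) = card {i\<in>I. d i = r}" .
  qed
  also have "\<dots> = card I" using sum.image_gen[OF fin, of "\<lambda>_. (1::nat)" d] by simp
  finally show ?thesis unfolding I_def .
qed

lemma lambda2_eq:
  assumes cp: "char_poly M = (\<Prod>i\<leftarrow>[0..<n]. [:- d i, 1:])"
  shows "lambda2 M = (let S = {t. (\<exists>i<n. d i = t) \<and> 2 \<le> card {i. i < n \<and> t \<le> d i}}
                      in if S = {} then 0 else Max S)"
  unfolding lambda2_def eig_count_ge_eq[OF cp] unfolding cp poly_prod_lin by simp

lemma card_ge2: assumes "2 \<le> card A" shows "\<exists>a b. a \<in> A \<and> b \<in> A \<and> a \<noteq> b"
proof -
  have "A \<noteq> {}" using assms by auto
  then obtain a where a: "a \<in> A" by auto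
  have "finite A" using assms by (metis card.infinite not_numeral_le_zero)
  hence "card (A - {a}) \<ge> 1" using assms a by (simp add: card_Diff_singleton)
  hence "A - {a} \<noteq> {}" by (metis card.empty le_zero_eq one_neq_zero)
  then obtain b where "b \<in> A - {a}" by auto
  thus ?thesis using a by auto
qed

lemma ip_lin2: "ip n (\<lambda>a. \<alpha> * f a - \<beta> * g a) (\<lambda>a. \<gamma> * f' a - \<delta> * g' a) =
   \<alpha> * \<gamma> * ip n f f' - \<alpha> * \<delta> * ip n f g' - \<beta> * \<gamma> * ip n g f' + \<beta> * \<delta> * ip n g g'"
  unfolding ip_def by (simp add: algebra_simps sum.distrib sum_subtractf sum_distrib_left)

locale spec =
  fixes n :: nat and N M :: "real mat" and v :: "nat \<Rightarrow> nat \<Rightarrow> real" and d :: "nat \<Rightarrow> real"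
    and u :: "nat \<Rightarrow> real"
  assumes N: "N \<in> carrier_mat n n" and S: "symm n N"
    and orth: "\<And>i j. i < n \<Longrightarrow> j < n \<Longrightarrow> ip n (v i) (v j) = (if i = j then 1 else 0)"
    and eig: "\<And>i a. i < n \<Longrightarrow> a < n \<Longrightarrow> mv n N (v i) a = d i * v i a"
    and compl: "\<And>a b. a < n \<Longrightarrow> b < n \<Longrightarrow> (\<Sum>i<n. v i a * v i b) = (if a = b then 1 else 0)"
    and cp: "char_poly M = (\<Prod>i\<leftarrow>[0..<n]. [:- d i, 1:])"
    and contr: "\<And>x. ip n (mv n N x) x \<le> ip n x x"
    and psd: "\<And>x. 0 \<le> ip n (mv n N x) x"
    and uN: "\<And>a. a < n \<Longrightarrow> mv n N u a = u a"
    and uu: "ip n u u = 1"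
begin

lemma expand: "a < n \<Longrightarrow> x a = (\<Sum>i<n. ip n x (v i) * v i a)"
proof -
  assume a: "a < n"
  have "(\<Sum>i<n. ip n x (v i) * v i a) = (\<Sum>i<n. \<Sum>b<n. x b * (v i b * v i a))"
    unfolding ip_def by (simp add: sum_distrib_right mult.assoc)
  also have "\<dots> = (\<Sum>b<n. x b * (\<Sum>i<n. v i b * v i a))"
    by (subst sum.swap) (simp add: sum_distrib_left)
  also have "\<dots> = (\<Sum>b<n. x b * (if b = a then 1 else 0))"
    by (rule sum.cong) (use compl a in auto)
  also have "\<dots> = x a" using a by (simp add: if_distrib[of "\<lambda>t. _ * t"] sum.delta cong: if_cong)
  finally show ?thesis by simp
qed

lemma parseval_aux: "(\<Sum>a<n. x a * (\<Sum>i<n. c i * v i a)) = (\<Sum>i<n. ip n x (v i) * c i)"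
proof -
  have "(\<Sum>a<n. x a * (\<Sum>i<n. c i * v i a)) = (\<Sum>a<n. \<Sum>i<n. c i * (x a * v i a))"
    by (simp add: sum_distrib_left ac_simps)
  also have "\<dots> = (\<Sum>i<n. \<Sum>a<n. c i * (x a * v i a))" by (rule sum.swap)
  also have "\<dots> = (\<Sum>i<n. ip n x (v i) * c i)"
    unfolding ip_def by (simp add: sum_distrib_left sum_distrib_right ac_simps)
  finally show ?thesis .
qed

lemma parseval: "ip n x y = (\<Sum>i<n. ip n x (v i) * ip n y (v i))"
proof -
  define c where "c = (\<lambda>i. ip n y (v i))"
  have ya: "y a = (\<Sum>i<n. c i * v i a)" if "a < n" for a
    using expand[OF that, of y] unfolding c_def .
  have "ip n x y = (\<Sum>a<n. x a * (\<Sum>i<n. c i * v i a))"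
    unfolding ip_def by (rule sum.cong[OF refl]) (simp add: ya)
  also have "\<dots> = (\<Sum>i<n. ip n x (v i) * c i)" by (rule parseval_aux)
  finally show ?thesis unfolding c_def .
qed

lemma coeff_mv: "i < n \<Longrightarrow> ip n (mv n N x) (v i) = d i * ip n x (v i)"
proof -
  assume i: "i < n"
  have "ip n (mv n N x) (v i) = ip n x (mv n N (v i))" by (rule ip_mv_symm[OF S])
  also have "\<dots> = ip n x (\<lambda>a. d i * v i a)" by (rule ip_cong) (use eig i in auto)
  also have "\<dots> = d i * ip n x (v i)" unfolding ip_def by (simp add: sum_distrib_left ac_simps)
  finally show ?thesis .
qed

lemma quad: "ip n (mv n N x) x = (\<Sum>i<n. d i * (ip n x (v i))^2)"
  unfolding parseval[of "mv n N x" x] by (rule sum.cong) (auto simp: coeff_mv power2_eq_square)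

lemma d_bounds: "i < n \<Longrightarrow> 0 \<le> d i \<and> d i \<le> 1"
proof -
  assume i: "i < n"
  have "ip n (mv n N (v i)) (v i) = d i" using coeff_mv[OF i, of "v i"] orth[OF i i] by simp
  thus ?thesis using psd[of "v i"] contr[of "v i"] orth[OF i i] by simp
qed

definition "SS = {t. (\<exists>i<n. d i = t) \<and> 2 \<le> card {i. i < n \<and> t \<le> d i}}"

lemma lam: "lambda2 M = (if SS = {} then 0 else Max SS)"
  unfolding lambda2_eq[OF cp] SS_def Let_def ..

lemma SS_fin: "finite SS"
  by (rule finite_subset[of _ "d ` {..<n}"]) (auto simp: SS_def)

lemma lam_in: "SS \<noteq> {} \<Longrightarrow> lambda2 M \<in> SS"
  unfolding lam using SS_fin by simp

lemma lam_bounds: "0 \<le> lambda2 M \<and> lambda2 M \<le> 1"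
proof (cases "SS = {}")
  case True thus ?thesis unfolding lam by simp
next
  case False
  from lam_in[OF False] obtain i where i: "i < n" "d i = lambda2 M" unfolding SS_def by auto
  thus ?thesis using d_bounds[OF i(1)] by simp
qed

lemma lam_small: "n < 2 \<Longrightarrow> lambda2 M = 0"
proof -
  assume n: "n < 2"
  have "SS = {}"
  proof (rule ccontr)
    assume "SS \<noteq> {}"
    then obtain t where "2 \<le> card {i. i < n \<and> t \<le> d i}" unfolding SS_def by auto
    moreover have "card {i. i < n \<and> t \<le> d i} \<le> card {..<n}" by (rule card_mono) auto
    ultimately show False using n by simp
  qed
  thus ?thesis unfolding lam by simp
qed

lemma sum_single: "j < n \<Longrightarrow> (\<And>i. i < n \<Longrightarrow> i \<noteq> j \<Longrightarrow> f i = 0) \<Longrightarrow> (\<Sum>i<n. f i) = (f j :: real)"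
  by (subst sum.remove[of _ j]) (auto intro!: sum.neutral)

lemma big_zero:
  assumes x: "ip n x u = 0" and j: "j < n" and dj: "d j > lambda2 M"
  shows "ip n x (v j) = 0"
proof -
  let ?m = "lambda2 M"
  have others: "d i \<le> ?m" if i: "i < n" "i \<noteq> j" for i
  proof (rule ccontr)
    assume "\<not> d i \<le> ?m"
    define t where "t = min (d i) (d j)"
    have "{i, j} \<subseteq> {k. k < n \<and> t \<le> d k}" using i j unfolding t_def by auto
    hence "card {i, j} \<le> card {k. k < n \<and> t \<le> d k}" by (intro card_mono) auto
    hence "2 \<le> card {k. k < n \<and> t \<le> d k}" using i by simp
    moreover have "\<exists>k<n. d k = t" using i j unfolding t_def by (cases "d i \<le> d j") (auto simp: min_def)
    ultimately have tS: "t \<in> SS" unfolding SS_def by auto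
    hence "t \<le> Max SS" using SS_fin by simp
    hence "t \<le> ?m" using tS unfolding lam by auto
    thus False using \<open>\<not> d i \<le> ?m\<close> dj unfolding t_def by simp
  qed
  have m1: "?m < 1" using dj d_bounds[OF j] by simp
  have cu0: "ip n u (v i) = 0" if i: "i < n" "i \<noteq> j" for i
  proof -
    have "ip n (mv n N u) (v i) = ip n u (v i)" by (rule ip_cong) (use uN in auto)
    hence "d i * ip n u (v i) = ip n u (v i)" using coeff_mv[OF i(1)] by simp
    moreover have "d i \<noteq> 1" using others[OF i] m1 by simp
    ultimately show ?thesis by (metis mult_cancel_right2)
  qed
  have "ip n x u = (\<Sum>i<n. ip n x (v i) * ip n u (v i))" by (rule parseval)
  also have "\<dots> = ip n x (v j) * ip n u (v j)"
    by (rule sum_single) (use j cu0 in auto)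
  finally have A: "ip n x (v j) * ip n u (v j) = 0" using x by simp
  have "1 = (\<Sum>i<n. ip n u (v i) * ip n u (v i))" using parseval[of u u] uu by simp
  also have "\<dots> = ip n u (v j) * ip n u (v j)"
    by (rule sum_single) (use j cu0 in auto)
  finally have "ip n u (v j) \<noteq> 0" by auto
  thus ?thesis using A by simp
qed

lemma L2a: assumes x: "ip n x u = 0"
  shows "ip n (mv n N x) x \<le> lambda2 M * ip n x x"
proof -
  have "ip n (mv n N x) x = (\<Sum>i<n. d i * (ip n x (v i))^2)" by (rule quad)
  also have "\<dots> \<le> (\<Sum>i<n. lambda2 M * (ip n x (v i))^2)"
  proof (rule sum_mono)
    fix i assume i: "i \<in> {..<n}"
    show "d i * (ip n x (v i))^2 \<le> lambda2 M * (ip n x (v i))^2"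
    proof (cases "d i > lambda2 M")
      case True thus ?thesis using big_zero[OF x _ True] i by simp
    next
      case False thus ?thesis by (intro mult_right_mono) auto
    qed
  qed
  also have "\<dots> = lambda2 M * ip n x x"
    using parseval[of x x] by (simp add: sum_distrib_left power2_eq_square)
  finally show ?thesis .
qed

lemma L2c: assumes n2: "2 \<le> n"
  shows "\<exists>y. ip n y u = 0 \<and> ip n y y > 0 \<and> lambda2 M * ip n y y \<le> ip n (mv n N y) y
          \<and> (lambda2 M = 1 \<longrightarrow> (\<forall>a<n. mv n N y a = y a))"
proof -
  let ?m = "lambda2 M"
  have ne: "SS \<noteq> {}"
  proof -
    define t where "t = Min (d ` {..<n})"
    have ne0: "0 \<in> {..<n}" using n2 by simp
    have "t \<in> d ` {..<n}" unfolding t_def using ne0 by (intro Min_in) auto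
    moreover have "{i. i < n \<and> t \<le> d i} = {..<n}" unfolding t_def by auto
    ultimately have "t \<in> SS" using n2 unfolding SS_def by auto
    thus ?thesis by auto
  qed
  have "2 \<le> card {i. i < n \<and> ?m \<le> d i}" using lam_in[OF ne] unfolding SS_def by auto
  from card_ge2[OF this] obtain i1 i2 where i12: "i1 < n" "i2 < n" "i1 \<noteq> i2" "?m \<le> d i1" "?m \<le> d i2"
    by auto
  define \<alpha> where "\<alpha> = ip n u (v i2)"
  define \<beta> where "\<beta> = ip n u (v i1)"
  show ?thesis
  proof (cases "\<alpha> = 0 \<and> \<beta> = 0")
    case True
    have "ip n (v i1) u = 0" using True unfolding \<beta>_def by (simp add: ip_comm)
    moreover have "ip n (v i1) (v i1) = 1" using orth i12 by simp
    moreover have "ip n (mv n N (v i1)) (v i1) = d i1" using coeff_mv[of i1 "v i1"] orth i12 by simp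
    moreover have "?m = 1 \<longrightarrow> (\<forall>a<n. mv n N (v i1) a = v i1 a)"
      using d_bounds[of i1] i12 eig by auto
    ultimately show ?thesis using i12 by (intro exI[of _ "v i1"]) auto
  next
    case False
    define y where "y = (\<lambda>a. \<alpha> * v i1 a - \<beta> * v i2 a)"
    have o: "ip n (v i1) (v i1) = 1" "ip n (v i2) (v i2) = 1" "ip n (v i1) (v i2) = 0" "ip n (v i2) (v i1) = 0"
      using orth i12 by auto
    have "ip n y u = \<alpha> * ip n (v i1) u - \<beta> * ip n (v i2) u"
      unfolding y_def ip_def by (simp add: sum_subtractf sum_distrib_left algebra_simps)
    hence yu: "ip n y u = 0" unfolding \<alpha>_def \<beta>_def by (simp add: ip_comm)
    have yy: "ip n y y = \<alpha>^2 + \<beta>^2" unfolding y_def ip_lin2 o by (simp add: power2_eq_square)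
    have ypos: "ip n y y > 0" unfolding yy using False by (simp add: sum_power2_gt_zero_iff)
    have mvy: "mv n N y a = \<alpha> * d i1 * v i1 a - \<beta> * d i2 * v i2 a" if a: "a < n" for a
    proof -
      have "mv n N y a = \<alpha> * mv n N (v i1) a - \<beta> * mv n N (v i2) a"
        unfolding y_def mv_def by (simp add: sum_subtractf sum_distrib_left algebra_simps)
      thus ?thesis using eig i12 a by simp
    qed
    have "ip n (mv n N y) y = ip n (\<lambda>a. (\<alpha> * d i1) * v i1 a - (\<beta> * d i2) * v i2 a) y"
      by (rule ip_cong) (use mvy in auto)
    also have "\<dots> = \<alpha>^2 * d i1 + \<beta>^2 * d i2" unfolding y_def ip_lin2 o by (simp add: power2_eq_square)
    finally have Q: "ip n (mv n N y) y = \<alpha>^2 * d i1 + \<beta>^2 * d i2" .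
    have "?m * \<alpha>^2 \<le> d i1 * \<alpha>^2" "?m * \<beta>^2 \<le> d i2 * \<beta>^2"
      using i12 by (intro mult_right_mono; simp)+
    hence "?m * ip n y y \<le> ip n (mv n N y) y" unfolding Q yy by (simp add: distrib_left mult.commute)
    moreover have "?m = 1 \<longrightarrow> (\<forall>a<n. mv n N y a = y a)"
    proof (intro impI allI)
      fix a assume m: "?m = 1" and a: "a < n"
      have "d i1 = 1" "d i2 = 1" using d_bounds[of i1] d_bounds[of i2] i12 m by auto
      thus "mv n N y a = y a" using mvy[OF a] unfolding y_def by simp
    qed
    ultimately show ?thesis using yu ypos by blast
  qed
qed

lemma L2_le: assumes c: "0 \<le> c" and H: "\<And>x. ip n x u = 0 \<Longrightarrow> ip n (mv n N x) x \<le> c * ip n x x"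
  shows "lambda2 M \<le> c"
proof (cases "n < 2")
  case True thus ?thesis using lam_small c by simp
next
  case False
  then obtain y where y: "ip n y u = 0" "ip n y y > 0" "lambda2 M * ip n y y \<le> ip n (mv n N y) y"
    using L2c by fastforce
  have "lambda2 M * ip n y y \<le> c * ip n y y" using y(3) H[OF y(1)] by simp
  thus ?thesis using y(2) by simp
qed

end




definition good :: "nat \<Rightarrow> (nat \<Rightarrow> real) \<Rightarrow> real mat \<Rightarrow> bool" where
  "good n \<pi> R \<longleftrightarrow> R \<in> carrier_mat n n \<and> (\<forall>i<n. \<forall>j<n. R $$ (i,j) \<ge> 0) \<and>
     (\<forall>i<n. (\<Sum>j<n. R $$ (i,j)) = 1) \<and> (\<forall>j<n. (\<Sum>i<n. \<pi> i * R $$ (i,j)) = \<pi> j)"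

definition symz :: "nat \<Rightarrow> (nat \<Rightarrow> real) \<Rightarrow> real mat \<Rightarrow> real mat" where
  "symz n \<pi> A = mat n n (\<lambda>(i,j). sqrt (\<pi> i) * A $$ (i,j) / sqrt (\<pi> j))"

lemma pow_mat_add: "A \<in> carrier_mat n n \<Longrightarrow> A ^\<^sub>m (a + b) = A ^\<^sub>m a * A ^\<^sub>m b"
proof (induction b)
  case 0 thus ?case by simp
next
  case (Suc b)
  have "A ^\<^sub>m (a + Suc b) = A ^\<^sub>m a * A ^\<^sub>m b * A" using Suc by simp
  also have "\<dots> = A ^\<^sub>m a * (A ^\<^sub>m b * A)" using Suc.prems
    by (simp add: assoc_mult_mat[of _ n n _ n _ n])
  finally show ?case by simp
qed

lemma pow_mat_mult': "A \<in> carrier_mat n n \<Longrightarrow> (A ^\<^sub>m p) ^\<^sub>m k = A ^\<^sub>m (p * k)"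
proof (induction k)
  case 0 thus ?case by simp
next
  case (Suc k)
  have "(A ^\<^sub>m p) ^\<^sub>m Suc k = A ^\<^sub>m (p * k) * A ^\<^sub>m p" using Suc by simp
  also have "\<dots> = A ^\<^sub>m (p * k + p)" by (rule pow_mat_add[OF Suc.prems, symmetric])
  finally show ?case by (simp add: algebra_simps)
qed

lemma jensen_sq: fixes w y :: "nat \<Rightarrow> real"
  assumes w: "\<And>j. j < n \<Longrightarrow> w j \<ge> 0" and s: "(\<Sum>j<n. w j) = 1"
  shows "(\<Sum>j<n. w j * y j)^2 \<le> (\<Sum>j<n. w j * (y j)^2)"
proof -
  define m where "m = (\<Sum>j<n. w j * y j)"
  have "0 \<le> (\<Sum>j<n. w j * (y j - m)^2)" using w by (intro sum_nonneg) auto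
  also have "\<dots> = (\<Sum>j<n. w j * (y j)^2) - 2 * m * (\<Sum>j<n. w j * y j) + m^2 * (\<Sum>j<n. w j)"
    by (simp add: power2_diff algebra_simps sum.distrib sum_subtractf sum_distrib_left sum_distrib_right)
  also have "\<dots> = (\<Sum>j<n. w j * (y j)^2) - m^2" unfolding s m_def[symmetric] by (simp add: power2_eq_square)
  finally show ?thesis unfolding m_def by simp
qed

lemma const_harmonic: fixes W :: "nat \<Rightarrow> nat \<Rightarrow> real" and g :: "nat \<Rightarrow> real"
  assumes n: "0 < n" and Wp: "\<And>i j. i < n \<Longrightarrow> j < n \<Longrightarrow> W i j > 0"
    and Ws: "\<And>i. i < n \<Longrightarrow> (\<Sum>j<n. W i j) = 1"
    and h: "\<And>i. i < n \<Longrightarrow> (\<Sum>j<n. W i j * g j) = g i"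
  shows "\<And>j. j < n \<Longrightarrow> g j = g 0"
proof -
  have ne: "g ` {..<n} \<noteq> {}" using n by auto
  obtain i0 where i0: "i0 < n" "g i0 = Max (g ` {..<n})"
    using Max_in[OF _ ne] by auto
  have le: "g j \<le> g i0" if "j < n" for j using i0 that by simp
  have "(\<Sum>j<n. W i0 j * (g i0 - g j)) = g i0 * (\<Sum>j<n. W i0 j) - (\<Sum>j<n. W i0 j * g j)"
    by (simp add: algebra_simps sum_subtractf sum_distrib_left)
  also have "\<dots> = 0" using Ws[OF i0(1)] h[OF i0(1)] by simp
  finally have z: "(\<Sum>j<n. W i0 j * (g i0 - g j)) = 0" .
  have eq: "g j = g i0" if j: "j < n" for j
  proof -
    have "\<forall>j\<in>{..<n}. W i0 j * (g i0 - g j) = 0"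
      using z by (subst (asm) sum_nonneg_eq_0_iff) (use le Wp[OF i0(1)] in \<open>auto intro!: mult_nonneg_nonneg simp: less_imp_le\<close>)
    hence "W i0 j * (g i0 - g j) = 0" using j by simp
    thus ?thesis using Wp[OF i0(1) j] by simp
  qed
  fix j assume "j < n" thus "g j = g 0" using eq n by simp
qed

context
  fixes n :: nat and \<pi> :: "nat \<Rightarrow> real"
  assumes pos: "\<And>i. i < n \<Longrightarrow> \<pi> i > 0" and sum1: "(\<Sum>i<n. \<pi> i) = 1"
begin

lemma good_mult: assumes "good n \<pi> A" "good n \<pi> B" shows "good n \<pi> (A * B)"
proof -
  have A: "A \<in> carrier_mat n n" and B: "B \<in> carrier_mat n n" using assms unfolding good_def by auto
  note e = mult_mat_entry[OF A B]
  have "(\<Sum>j<n. (A * B) $$ (i,j)) = 1" if i: "i < n" for i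
  proof -
    have "(\<Sum>j<n. (A * B) $$ (i,j)) = (\<Sum>j<n. \<Sum>k<n. A $$ (i,k) * B $$ (k,j))"
      using i by (simp add: e)
    also have "\<dots> = (\<Sum>k<n. A $$ (i,k) * (\<Sum>j<n. B $$ (k,j)))"
      by (subst sum.swap) (simp add: sum_distrib_left)
    also have "\<dots> = (\<Sum>k<n. A $$ (i,k))" using assms unfolding good_def by simp
    finally show ?thesis using assms i unfolding good_def by simp
  qed
  moreover have "(\<Sum>i<n. \<pi> i * (A * B) $$ (i,j)) = \<pi> j" if j: "j < n" for j
  proof -
    have "(\<Sum>i<n. \<pi> i * (A * B) $$ (i,j)) = (\<Sum>i<n. \<Sum>k<n. \<pi> i * A $$ (i,k) * B $$ (k,j))"
      using j by (simp add: e sum_distrib_left ac_simps)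
    also have "\<dots> = (\<Sum>k<n. (\<Sum>i<n. \<pi> i * A $$ (i,k)) * B $$ (k,j))"
      by (subst sum.swap) (simp add: sum_distrib_right)
    also have "\<dots> = (\<Sum>k<n. \<pi> k * B $$ (k,j))"
      using assms unfolding good_def by (intro sum.cong) auto
    finally show ?thesis using assms j unfolding good_def by simp
  qed
  moreover have "(A * B) $$ (i,j) \<ge> 0" if "i < n" "j < n" for i j
    using assms that unfolding good_def by (auto simp: e intro!: sum_nonneg mult_nonneg_nonneg)
  ultimately show ?thesis using A B unfolding good_def by auto
qed

lemma good_one: "good n \<pi> (1\<^sub>m n)"
  unfolding good_def by (auto simp: if_distrib[of "\<lambda>t. _ * t"] sum.delta cong: if_cong)

lemma good_pow: assumes "good n \<pi> A" shows "good n \<pi> (A ^\<^sub>m k)"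
proof (induction k)
  case 0
  have "dim_row A = n" using assms unfolding good_def by auto
  thus ?case using good_one by simp
next
  case (Suc k) thus ?case using good_mult assms by simp
qed

lemma sp: "i < n \<Longrightarrow> sqrt (\<pi> i) > 0" using pos by simp

lemma symz_mult: assumes "A \<in> carrier_mat n n" "B \<in> carrier_mat n n"
  shows "symz n \<pi> (A * B) = symz n \<pi> A * symz n \<pi> B"
proof (rule eq_matI)
  fix i j assume ij: "i < dim_row (symz n \<pi> A * symz n \<pi> B)" "j < dim_col (symz n \<pi> A * symz n \<pi> B)"
  hence ij': "i < n" "j < n" by (auto simp: symz_def)
  have c: "symz n \<pi> A \<in> carrier_mat n n" "symz n \<pi> B \<in> carrier_mat n n" by (auto simp: symz_def)
  have "(symz n \<pi> A * symz n \<pi> B) $$ (i,j) =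
      (\<Sum>k<n. sqrt (\<pi> i) * A $$ (i,k) / sqrt (\<pi> k) * (sqrt (\<pi> k) * B $$ (k,j) / sqrt (\<pi> j)))"
    using ij' by (subst mult_mat_entry[OF c]) (auto simp: symz_def)
  also have "\<dots> = (\<Sum>k<n. sqrt (\<pi> i) * (A $$ (i,k) * B $$ (k,j)) / sqrt (\<pi> j))"
  proof (rule sum.cong[OF refl])
    fix k assume "k \<in> {..<n}"
    hence "sqrt (\<pi> k) > 0" using sp by simp
    thus "sqrt (\<pi> i) * A $$ (i,k) / sqrt (\<pi> k) * (sqrt (\<pi> k) * B $$ (k,j) / sqrt (\<pi> j)) =
      sqrt (\<pi> i) * (A $$ (i,k) * B $$ (k,j)) / sqrt (\<pi> j)" by (simp add: field_simps)
  qed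
  also have "\<dots> = symz n \<pi> (A * B) $$ (i,j)"
    using ij' by (simp add: symz_def mult_mat_entry[OF assms] sum_distrib_left sum_divide_distrib)
  finally show "symz n \<pi> (A * B) $$ (i,j) = (symz n \<pi> A * symz n \<pi> B) $$ (i,j)" by simp
qed (auto simp: symz_def)

lemma symz_one: "symz n \<pi> (1\<^sub>m n) = 1\<^sub>m n"
proof (rule eq_matI)
  fix i j assume "i < dim_row (1\<^sub>m n)" "j < dim_col (1\<^sub>m n)"
  hence ij: "i < n" "j < n" by auto
  thus "symz n \<pi> (1\<^sub>m n) $$ (i,j) = 1\<^sub>m n $$ (i,j)" using pos[OF ij(2)] by (simp add: symz_def)
qed (auto simp: symz_def)

lemma symz_pow: assumes A: "A \<in> carrier_mat n n" shows "symz n \<pi> (A ^\<^sub>m k) = (symz n \<pi> A) ^\<^sub>m k"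
proof (induction k)
  case 0 thus ?case using A symz_one by (simp add: symz_def)
next
  case (Suc k) thus ?case using A by (simp add: symz_mult)
qed

lemma symz_tr: assumes "R \<in> carrier_mat n n"
  shows "symz n \<pi> (time_reversal n \<pi> R) = transpose_mat (symz n \<pi> R)"
proof (rule eq_matI)
  fix i j assume "i < dim_row (transpose_mat (symz n \<pi> R))" "j < dim_col (transpose_mat (symz n \<pi> R))"
  hence ij: "i < n" "j < n" by (auto simp: symz_def)
  have pi: "\<pi> i > 0" "\<pi> j > 0" using pos ij by auto
  have "sqrt (\<pi> i) * (\<pi> j * R $$ (j,i) / \<pi> i) / sqrt (\<pi> j) = sqrt (\<pi> j) * R $$ (j,i) / sqrt (\<pi> i)"
  proof -
    have a: "\<pi> i = sqrt (\<pi> i) * sqrt (\<pi> i)" "\<pi> j = sqrt (\<pi> j) * sqrt (\<pi> j)" using pi by simp_all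
    show ?thesis using pi by (subst a(1), subst a(2)) (simp add: field_simps)
  qed
  thus "symz n \<pi> (time_reversal n \<pi> R) $$ (i,j) = transpose_mat (symz n \<pi> R) $$ (i,j)"
    using ij by (simp add: symz_def time_reversal_def)
qed (auto simp: symz_def time_reversal_def)

lemma symz_char_poly: assumes A: "A \<in> carrier_mat n n"
  shows "char_poly (symz n \<pi> A) = char_poly A"
proof -
  define D where "D = mat n n (\<lambda>(i,j). if i = j then sqrt (\<pi> i) else 0)"
  define E where "E = mat n n (\<lambda>(i,j). if i = j then 1 / sqrt (\<pi> i) else 0)"
  have D: "D \<in> carrier_mat n n" and E: "E \<in> carrier_mat n n" unfolding D_def E_def by auto
  have DE: "D * E = 1\<^sub>m n"
  proof (rule eq_matI)
    fix i j assume "i < dim_row (1\<^sub>m n)" "j < dim_col (1\<^sub>m n)"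
    hence ij: "i < n" "j < n" by auto
    have "(D * E) $$ (i,j) = (\<Sum>k<n. D $$ (i,k) * E $$ (k,j))" by (rule mult_mat_entry[OF D E ij])
    also have "\<dots> = (if i = j then 1 else 0)"
      using ij sp[OF ij(1)] pos[OF ij(2)] unfolding D_def E_def by (simp add: if_distrib[of "\<lambda>t. t * _"] sum.delta cong: if_cong)
    finally show "(D * E) $$ (i,j) = 1\<^sub>m n $$ (i,j)" using ij by simp
  qed (use D E in auto)
  have ED: "E * D = 1\<^sub>m n"
  proof (rule eq_matI)
    fix i j assume "i < dim_row (1\<^sub>m n)" "j < dim_col (1\<^sub>m n)"
    hence ij: "i < n" "j < n" by auto
    have "(E * D) $$ (i,j) = (\<Sum>k<n. E $$ (i,k) * D $$ (k,j))" by (rule mult_mat_entry[OF E D ij])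
    also have "\<dots> = (if i = j then 1 else 0)"
      using ij sp[OF ij(1)] pos[OF ij(2)] unfolding D_def E_def by (simp add: if_distrib[of "\<lambda>t. t * _"] sum.delta cong: if_cong)
    finally show "(E * D) $$ (i,j) = 1\<^sub>m n $$ (i,j)" using ij by simp
  qed (use D E in auto)
  have "symz n \<pi> A = D * A * E"
  proof (rule eq_matI)
    fix i j assume "i < dim_row (D * A * E)" "j < dim_col (D * A * E)"
    hence ij: "i < n" "j < n" using D E by auto
    have DA: "D * A \<in> carrier_mat n n" using D A by simp
    have "(D * A * E) $$ (i,j) = (\<Sum>k<n. (D * A) $$ (i,k) * E $$ (k,j))" by (rule mult_mat_entry[OF DA E ij])
    also have "\<dots> = (D * A) $$ (i,j) * (1 / sqrt (\<pi> j))"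
      using ij by (simp add: E_def if_distrib[of "\<lambda>t. _ * t"] sum.delta cong: if_cong)
    also have "(D * A) $$ (i,j) = sqrt (\<pi> i) * A $$ (i,j)"
      unfolding mult_mat_entry[OF D A ij] using ij
      by (simp add: D_def if_distrib[of "\<lambda>t. t * _"] sum.delta cong: if_cong)
    finally show "symz n \<pi> A $$ (i,j) = (D * A * E) $$ (i,j)" using ij by (simp add: symz_def)
  qed (use D E in \<open>auto simp: symz_def\<close>)
  hence "similar_mat_wit (symz n \<pi> A) A D E"
    unfolding similar_mat_wit_def Let_def using D E A DE ED by (auto simp: symz_def)
  hence "similar_mat (symz n \<pi> A) A" unfolding similar_mat_def by blast
  thus ?thesis by (rule char_poly_similar)
qed


lemma sp2: assumes "i < n" shows "sqrt (\<pi> i) * sqrt (\<pi> i) = \<pi> i" using pos[OF assms] by simp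

lemma sqmul: "0 \<le> (a::real) \<Longrightarrow> (sqrt a * S) * (sqrt a * S) = a * S^2"
proof -
  assume a: "0 \<le> a"
  have "(sqrt a * S) * (sqrt a * S) = (sqrt a * sqrt a) * (S * S)" by (simp add: ac_simps)
  thus ?thesis using a by (simp add: power2_eq_square)
qed

lemma tr_carrier: "time_reversal n \<pi> R \<in> carrier_mat n n" by (simp add: time_reversal_def)

lemma symz_carrier: "symz n \<pi> R \<in> carrier_mat n n" by (simp add: symz_def)

lemma N_eq: assumes "R \<in> carrier_mat n n"
  shows "symz n \<pi> (time_reversal n \<pi> R * R) = transpose_mat (symz n \<pi> R) * symz n \<pi> R"
  by (simp add: symz_mult[OF tr_carrier assms] symz_tr[OF assms])

lemma N_symm: assumes "R \<in> carrier_mat n n"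
  shows "symm n (symz n \<pi> (time_reversal n \<pi> R * R))"
proof -
  let ?T = "symz n \<pi> R"
  have "transpose_mat (transpose_mat ?T * ?T) = transpose_mat ?T * ?T"
    using symz_carrier[of R] by (simp add: transpose_mult[of _ n n _ n])
  thus ?thesis unfolding N_eq[OF assms]
    by (subst symm_transpose[of _ n]) (use symz_carrier[of R] in auto)
qed

lemma mvT: "mv n (symz n \<pi> R) x i = (\<Sum>j<n. sqrt (\<pi> i) * R $$ (i,j) / sqrt (\<pi> j) * x j)" if "i < n"
  using that unfolding mv_def symz_def by simp

lemma quadN: assumes R: "R \<in> carrier_mat n n"
  shows "ip n (mv n (symz n \<pi> (time_reversal n \<pi> R * R)) x) z = ip n (mv n (symz n \<pi> R) x) (mv n (symz n \<pi> R) z)"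
proof -
  let ?T = "symz n \<pi> R"
  have T: "?T \<in> carrier_mat n n" "transpose_mat ?T \<in> carrier_mat n n" by (auto simp: symz_def)
  have "ip n (mv n (transpose_mat ?T * ?T) x) z = ip n (mv n (transpose_mat ?T) (mv n ?T x)) z"
    by (rule ip_cong) (auto simp: mv_mult[OF T(2) T(1)])
  also have "\<dots> = ip n (mv n ?T x) (mv n ?T z)" by (rule ip_mv_transpose[OF T(1)])
  finally show ?thesis unfolding N_eq[OF R] .
qed

lemma contrT: assumes g: "good n \<pi> R"
  shows "ip n (mv n (symz n \<pi> R) x) (mv n (symz n \<pi> R) x) \<le> ip n x x"
proof -
  define y where "y = (\<lambda>j. x j / sqrt (\<pi> j))"
  have R: "\<And>i j. i < n \<Longrightarrow> j < n \<Longrightarrow> R $$ (i,j) \<ge> 0" "\<And>i. i < n \<Longrightarrow> (\<Sum>j<n. R $$ (i,j)) = 1"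
    "\<And>j. j < n \<Longrightarrow> (\<Sum>i<n. \<pi> i * R $$ (i,j)) = \<pi> j" using g unfolding good_def by auto
  have mv: "mv n (symz n \<pi> R) x i = sqrt (\<pi> i) * (\<Sum>j<n. R $$ (i,j) * y j)" if i: "i < n" for i
    unfolding mvT[OF i] y_def sum_distrib_left by (rule sum.cong) (auto simp: field_simps)
  have "ip n (mv n (symz n \<pi> R) x) (mv n (symz n \<pi> R) x) = (\<Sum>i<n. \<pi> i * (\<Sum>j<n. R $$ (i,j) * y j)^2)"
    unfolding ip_def by (rule sum.cong) (use pos in \<open>auto simp: mv sqmul less_imp_le\<close>)
  also have "\<dots> \<le> (\<Sum>i<n. \<pi> i * (\<Sum>j<n. R $$ (i,j) * (y j)^2))"
    by (rule sum_mono, rule mult_left_mono, rule jensen_sq) (use R pos in \<open>auto intro: less_imp_le\<close>)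
  also have "\<dots> = (\<Sum>i<n. \<Sum>j<n. \<pi> i * R $$ (i,j) * (y j)^2)"
    by (simp add: sum_distrib_left mult.assoc)
  also have "\<dots> = (\<Sum>j<n. \<Sum>i<n. \<pi> i * R $$ (i,j) * (y j)^2)" by (rule sum.swap)
  also have "\<dots> = (\<Sum>j<n. \<pi> j * (y j)^2)"
    by (rule sum.cong[OF refl]) (simp add: sum_distrib_right[symmetric] R(3))
  also have "\<dots> = ip n x x" unfolding ip_def y_def
  proof (rule sum.cong[OF refl])
    fix j assume "j \<in> {..<n}"
    hence p: "\<pi> j > 0" using pos by simp
    have "(x j / sqrt (\<pi> j))^2 = (x j)^2 / \<pi> j" using p by (simp add: power_divide)
    thus "\<pi> j * (x j / sqrt (\<pi> j))^2 = x j * x j" using p by (simp add: power2_eq_square)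
  qed
  finally show ?thesis .
qed

definition uu :: "nat \<Rightarrow> real" where "uu = (\<lambda>i. sqrt (\<pi> i))"

lemma Tu: assumes g: "good n \<pi> R" and a: "a < n" shows "mv n (symz n \<pi> R) uu a = uu a"
proof -
  have "mv n (symz n \<pi> R) uu a = sqrt (\<pi> a) * (\<Sum>j<n. R $$ (a,j))"
    unfolding mvT[OF a] uu_def sum_distrib_left
  proof (rule sum.cong[OF refl])
    fix j assume "j \<in> {..<n}"
    hence "sqrt (\<pi> j) > 0" using sp by simp
    thus "sqrt (\<pi> a) * R $$ (a, j) / sqrt (\<pi> j) * sqrt (\<pi> j) = sqrt (\<pi> a) * R $$ (a, j)" by simp
  qed
  thus ?thesis using g a unfolding good_def uu_def by simp
qed

lemma TTu: assumes g: "good n \<pi> R" and a: "a < n" shows "mv n (transpose_mat (symz n \<pi> R)) uu a = uu a"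
proof -
  have "mv n (transpose_mat (symz n \<pi> R)) uu a = (\<Sum>j<n. \<pi> j * R $$ (j,a)) / sqrt (\<pi> a)"
    unfolding mv_def uu_def sum_divide_distrib
    by (rule sum.cong) (use a sp sp2 in \<open>auto simp: symz_def field_simps\<close>)
  also have "\<dots> = \<pi> a / sqrt (\<pi> a)" using g a unfolding good_def by simp
  also have "\<dots> = uu a" unfolding uu_def using sp2[OF a] sp[OF a] by (simp add: field_simps)
  finally show ?thesis .
qed

lemma Nu: assumes g: "good n \<pi> R" and a: "a < n"
  shows "mv n (symz n \<pi> (time_reversal n \<pi> R * R)) uu a = uu a"
proof -
  have R: "R \<in> carrier_mat n n" using g unfolding good_def by auto
  let ?T = "symz n \<pi> R"
  have T: "?T \<in> carrier_mat n n" "transpose_mat ?T \<in> carrier_mat n n" by (auto simp: symz_def)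
  have "mv n (transpose_mat ?T * ?T) uu a = mv n (transpose_mat ?T) (mv n ?T uu) a"
    by (rule mv_mult[OF T(2) T(1) a])
  also have "\<dots> = mv n (transpose_mat ?T) uu a" by (rule mv_cong) (use Tu[OF g] in auto)
  also have "\<dots> = uu a" by (rule TTu[OF g a])
  finally show ?thesis unfolding N_eq[OF R] .
qed

lemma Tperp: assumes g: "good n \<pi> R" shows "ip n (mv n (symz n \<pi> R) x) uu = ip n x uu"
proof -
  have T: "symz n \<pi> R \<in> carrier_mat n n" by (simp add: symz_def)
  have "ip n (mv n (symz n \<pi> R) x) uu = ip n uu (mv n (symz n \<pi> R) x)" by (rule ip_comm)
  also have "\<dots> = ip n (mv n (transpose_mat (symz n \<pi> R)) uu) x" by (rule ip_mv_transpose[OF T, symmetric])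
  also have "\<dots> = ip n uu x" by (rule ip_cong) (use TTu[OF g] in auto)
  finally show ?thesis by (simp add: ip_comm)
qed

lemma uu1: "ip n uu uu = 1"
  unfolding ip_def uu_def using sum1 sp2 by simp

lemma spec_good: assumes g: "good n \<pi> R"
  shows "\<exists>v d. spec n (symz n \<pi> (time_reversal n \<pi> R * R)) (time_reversal n \<pi> R * R) v d uu"
proof -
  have R: "R \<in> carrier_mat n n" using g unfolding good_def by auto
  let ?M = "time_reversal n \<pi> R * R"
  let ?N = "symz n \<pi> ?M"
  have M: "?M \<in> carrier_mat n n" using mult_carrier_mat[OF tr_carrier R] .
  have N: "?N \<in> carrier_mat n n" by (simp add: symz_def)
  obtain v d where sp: "(\<forall>i<n. \<forall>j<n. ip n (v i) (v j) = (if i = j then 1 else 0))"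
      "(\<forall>i<n. \<forall>a<n. mv n ?N (v i) a = d i * v i a)"
      "(\<forall>a<n. \<forall>b<n. (\<Sum>i<n. v i a * v i b) = (if a = b then 1 else 0))"
      "char_poly ?N = (\<Prod>i\<leftarrow>[0..<n]. [:- d i, 1:])"
    using spectral[OF N N_symm[OF R]] by blast
  have "spec n ?N ?M v d uu"
  proof
    show "char_poly ?M = (\<Prod>i\<leftarrow>[0..<n]. [:- d i, 1:])" using sp(4) symz_char_poly[OF M] by simp
    show "ip n (mv n ?N x) x \<le> ip n x x" for x unfolding quadN[OF R] by (rule contrT[OF g])
    show "0 \<le> ip n (mv n ?N x) x" for x unfolding quadN[OF R] by (rule ip_self_ge0)
    show "mv n ?N uu a = uu a" if "a < n" for a by (rule Nu[OF g that])
  qed (use N N_symm[OF R] sp uu1 in auto)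
  thus ?thesis by blast
qed

abbreviation "LL R \<equiv> lambda2 (time_reversal n \<pi> R * R)"

lemma LL_bounds: "good n \<pi> R \<Longrightarrow> 0 \<le> LL R \<and> LL R \<le> 1"
  using spec_good spec.lam_bounds by blast

lemma LL_a: assumes g: "good n \<pi> R" and x: "ip n x uu = 0"
  shows "ip n (mv n (symz n \<pi> R) x) (mv n (symz n \<pi> R) x) \<le> LL R * ip n x x"
proof -
  have R: "R \<in> carrier_mat n n" using g unfolding good_def by auto
  obtain v d where "spec n (symz n \<pi> (time_reversal n \<pi> R * R)) (time_reversal n \<pi> R * R) v d uu"
    using spec_good[OF g] by blast
  from spec.L2a[OF this x] show ?thesis unfolding quadN[OF R] .
qed

lemma LL_le: assumes g: "good n \<pi> R" and c: "0 \<le> c"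
  and H: "\<And>x. ip n x uu = 0 \<Longrightarrow> ip n (mv n (symz n \<pi> R) x) (mv n (symz n \<pi> R) x) \<le> c * ip n x x"
  shows "LL R \<le> c"
proof -
  have R: "R \<in> carrier_mat n n" using g unfolding good_def by auto
  obtain v d where s: "spec n (symz n \<pi> (time_reversal n \<pi> R * R)) (time_reversal n \<pi> R * R) v d uu"
    using spec_good[OF g] by blast
  show ?thesis by (rule spec.L2_le[OF s c]) (unfold quadN[OF R], rule H)
qed

lemma LL_pow: assumes g: "good n \<pi> R" shows "LL (R ^\<^sub>m p) \<le> (LL R)^p"
proof -
  have R: "R \<in> carrier_mat n n" using g unfolding good_def by auto
  let ?T = "symz n \<pi> R"
  have T: "?T \<in> carrier_mat n n" by (simp add: symz_def)
  have key: "ip n (mv n (?T ^\<^sub>m p) x) (mv n (?T ^\<^sub>m p) x) \<le> (LL R)^p * ip n x x"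
    if "ip n x uu = 0" for x
    using that
  proof (induction p arbitrary: x)
    case 0
    have "mv n (?T ^\<^sub>m 0) x a = x a" if "a < n" for a
      using that T unfolding mv_def by (simp add: if_distrib[of "\<lambda>t. t * _"] sum.delta cong: if_cong)
    hence "ip n (mv n (?T ^\<^sub>m 0) x) (mv n (?T ^\<^sub>m 0) x) = ip n x x" by (intro ip_cong) auto
    thus ?case by simp
  next
    case (Suc p)
    have Tp: "?T ^\<^sub>m p \<in> carrier_mat n n" using T by simp
    have "ip n (mv n (?T ^\<^sub>m Suc p) x) (mv n (?T ^\<^sub>m Suc p) x) =
        ip n (mv n (?T ^\<^sub>m p) (mv n ?T x)) (mv n (?T ^\<^sub>m p) (mv n ?T x))"
      by (intro ip_cong) (auto simp: mv_mult[OF Tp T])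
    also have "\<dots> \<le> (LL R)^p * ip n (mv n ?T x) (mv n ?T x)"
      by (rule Suc.IH) (simp add: Tperp[OF g] Suc.prems)
    also have "\<dots> \<le> (LL R)^p * (LL R * ip n x x)"
      by (rule mult_left_mono[OF LL_a[OF g Suc.prems]]) (use LL_bounds[OF g] in simp)
    finally show ?case by (simp add: ac_simps)
  qed
  show ?thesis
  proof (rule LL_le[OF good_pow[OF g]])
    show "0 \<le> (LL R)^p" using LL_bounds[OF g] by simp
    fix x assume "ip n x uu = 0"
    thus "ip n (mv n (symz n \<pi> (R ^\<^sub>m p)) x) (mv n (symz n \<pi> (R ^\<^sub>m p)) x) \<le> LL R ^ p * ip n x x"
      using key unfolding symz_pow[OF R] by simp
  qed
qed

lemma LL_small: assumes g: "good n \<pi> R" and n: "n < 2" shows "LL R = 0"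
  using spec_good[OF g] spec.lam_small[OF _ n] by blast

lemma LL_pos: assumes g: "good n \<pi> R" and n: "2 \<le> n" and Rp: "\<And>i j. i < n \<Longrightarrow> j < n \<Longrightarrow> R $$ (i,j) > 0"
  shows "LL R < 1"
proof (rule ccontr)
  assume "\<not> LL R < 1"
  hence L1: "LL R = 1" using LL_bounds[OF g] by simp
  have R: "R \<in> carrier_mat n n" using g unfolding good_def by auto
  let ?M = "time_reversal n \<pi> R * R"
  let ?N = "symz n \<pi> ?M"
  obtain v d where s: "spec n ?N ?M v d uu" using spec_good[OF g] by blast
  from spec.L2c[OF s n] L1 obtain y where y: "ip n y uu = 0" "ip n y y > 0" "\<forall>a<n. mv n ?N y a = y a"
    by auto
  have TR: "time_reversal n \<pi> R \<in> carrier_mat n n" by (rule tr_carrier)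
  have Ment: "?M $$ (i,j) = (\<Sum>l<n. \<pi> l * R $$ (l,i) / \<pi> i * R $$ (l,j))" if "i < n" "j < n" for i j
    unfolding mult_mat_entry[OF TR R that] by (rule sum.cong[OF refl]) (use that in \<open>simp add: time_reversal_def\<close>)
  have Mpos: "?M $$ (i,j) > 0" if ij: "i < n" "j < n" for i j
  proof -
    have "(\<Sum>l<n. \<pi> l * R $$ (l,i) / \<pi> i * R $$ (l,j)) > 0"
      by (rule sum_pos) (use ij n pos Rp in \<open>auto intro!: mult_pos_pos divide_pos_pos\<close>)
    thus ?thesis using Ment[OF ij] by simp
  qed
  have Msum: "(\<Sum>j<n. ?M $$ (i,j)) = 1" if i: "i < n" for i
  proof -
    have "(\<Sum>j<n. ?M $$ (i,j)) = (\<Sum>j<n. \<Sum>l<n. \<pi> l * R $$ (l,i) / \<pi> i * R $$ (l,j))"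
      using i by (simp add: Ment)
    also have "\<dots> = (\<Sum>l<n. \<Sum>j<n. \<pi> l * R $$ (l,i) / \<pi> i * R $$ (l,j))" by (rule sum.swap)
    also have "\<dots> = (\<Sum>l<n. \<pi> l * R $$ (l,i) / \<pi> i)"
    proof (rule sum.cong[OF refl])
      fix l assume l: "l \<in> {..<n}"
      have "(\<Sum>j<n. \<pi> l * R $$ (l,i) / \<pi> i * R $$ (l,j)) = \<pi> l * R $$ (l,i) / \<pi> i * (\<Sum>j<n. R $$ (l,j))"
        by (rule sum_distrib_left[symmetric])
      thus "(\<Sum>j<n. \<pi> l * R $$ (l,i) / \<pi> i * R $$ (l,j)) = \<pi> l * R $$ (l,i) / \<pi> i"
        using g l unfolding good_def by simp
    qed
    also have "\<dots> = (\<Sum>l<n. \<pi> l * R $$ (l,i)) / \<pi> i" by (simp add: sum_divide_distrib)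
    also have "\<dots> = 1" using g i pos[OF i] unfolding good_def by simp
    finally show ?thesis .
  qed
  define gg where "gg = (\<lambda>j. y j / sqrt (\<pi> j))"
  have harm: "(\<Sum>j<n. ?M $$ (i,j) * gg j) = gg i" if i: "i < n" for i
  proof -
    have "mv n ?N y i = sqrt (\<pi> i) * (\<Sum>j<n. ?M $$ (i,j) * gg j)"
      unfolding mvT[OF i] gg_def sum_distrib_left by (rule sum.cong) (auto simp: field_simps)
    hence "sqrt (\<pi> i) * (\<Sum>j<n. ?M $$ (i,j) * gg j) = y i" using y(3) i by simp
    thus ?thesis unfolding gg_def using sp[OF i] by (simp add: field_simps)
  qed
  have const: "gg j = gg 0" if "j < n" for j
    by (rule const_harmonic[of n "\<lambda>i j. ?M $$ (i,j)" gg]) (use n Mpos Msum harm that in auto)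
  have yj: "y j = gg 0 * uu j" if j: "j < n" for j
    using const[OF j] sp[OF j] unfolding gg_def uu_def by (simp add: field_simps)
  have "ip n y uu = gg 0 * ip n uu uu" unfolding ip_def sum_distrib_left
    by (rule sum.cong) (auto simp: yj)
  hence "gg 0 = 0" using y(1) uu1 by simp
  hence "ip n y y = 0" unfolding ip_def using yj by simp
  thus False using y(2) by simp
qed

end



lemma bern_aux: fixes x :: real assumes x: "0 \<le> x" "x \<le> 1"
  shows "(1 - x)^p \<le> 1 - real p * x + real p * (real p - 1) / 2 * x^2"
proof (induction p)
  case 0 thus ?case by simp
next
  case (Suc p)
  define c where "c = real p * (real p - 1) / 2"
  have c: "c \<ge> 0" unfolding c_def by (cases p) auto
  have "(1 - x)^(Suc p) = (1 - x) * (1 - x)^p" by simp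
  also have "\<dots> \<le> (1 - x) * (1 - real p * x + c * x^2)"
    by (rule mult_left_mono) (use Suc x in \<open>auto simp: c_def\<close>)
  also have "\<dots> = 1 - real (Suc p) * x + real (Suc p) * (real (Suc p) - 1) / 2 * x^2 - c * x^3"
    unfolding c_def by (simp add: field_simps power2_eq_square power3_eq_cube)
  also have "\<dots> \<le> 1 - real (Suc p) * x + real (Suc p) * (real (Suc p) - 1) / 2 * x^2"
    using c x by simp
  finally show ?case .
qed

lemma bern: fixes x :: real assumes x: "0 < x" "x \<le> 1" and p: "p \<ge> 1"
  shows "real p * x * (1 - real p * x / 2) < 1 - (1 - x)^p"
proof -
  have A: "(1 - x)^p \<le> 1 - real p * x + real p * (real p - 1) / 2 * x^2" using bern_aux x by simp
  have B: "real p * (real p - 1) / 2 * x^2 < real p * real p / 2 * x^2"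
    using x p by (simp add: field_simps)
  have C: "real p * x * (1 - real p * x / 2) = real p * x - real p * real p / 2 * x^2"
    by (simp add: algebra_simps power2_eq_square)
  show ?thesis using A B C by linarith
qed

lemma sup_att: fixes f :: "nat \<Rightarrow> real"
  assumes le: "\<And>k. k \<ge> 1 \<Longrightarrow> f k \<le> 1 / real k" and k0: "k0 \<ge> 1" "f k0 > 0"
  shows "\<exists>km\<ge>1. \<forall>k\<ge>1. f k \<le> f km"
proof -
  define K where "K = nat \<lceil>1 / f k0\<rceil> + k0"
  have ne: "f ` {1..K} \<noteq> {}" using k0 unfolding K_def by auto
  obtain km where km: "km \<in> {1..K}" "f km = Max (f ` {1..K})" using Max_in[OF _ ne] by auto
  have "f k \<le> f km" if k: "k \<ge> 1" for k
  proof (cases "k \<le> K")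
    case True thus ?thesis using km k by simp
  next
    case False
    have "real k > 1 / f k0"
    proof -
      have "1 / f k0 \<le> real (nat \<lceil>1 / f k0\<rceil>)" by linarith
      also have "\<dots> < real k" using False unfolding K_def using k0 by linarith
      finally show ?thesis .
    qed
    hence "1 / real k < f k0" using k0 k by (simp add: field_simps)
    hence "f k < f k0" using le[OF k] by simp
    also have "f k0 \<le> f km" using km k0 unfolding K_def by simp
    finally show ?thesis by simp
  qed
  thus ?thesis using km by auto
qed

theorem mainTheorem4:
  fixes n :: nat and P :: "real mat" and \<pi> :: "nat \<Rightarrow> real" and p :: nat
  assumes "n \<ge> 1"
    and "row_stochastic n P"
    and "primitive n P"
    and "stationary_dist n P \<pi>"
    and "p \<ge> 1"
  shows "real p * gamma_ps n \<pi> P * (1 - real p * real (k_ps n \<pi> P) * gamma_ps n \<pi> P / 2)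
           < gamma_ps n \<pi> (P ^\<^sub>m p)
       \<and> gamma_ps n \<pi> (P ^\<^sub>m p) \<le> real p * gamma_ps n \<pi> P
       \<and> (real p \<le> 1 / (real (k_ps n \<pi> P) * gamma_ps n \<pi> P)
            \<longrightarrow> gamma_ps n \<pi> (P ^\<^sub>m p) \<ge> real p * gamma_ps n \<pi> P / 2)"
proof -
  note n1 = assms(1) and rs = assms(2) and prim = assms(3) and st = assms(4) and p1 = assms(5)
  have pos: "\<And>i. i < n \<Longrightarrow> \<pi> i > 0" and sum1: "(\<Sum>i<n. \<pi> i) = 1"
    using st unfolding stationary_dist_def by auto
  have Pc: "P \<in> carrier_mat n n" using rs unfolding row_stochastic_def by auto
  have gP: "good n \<pi> P" using rs st unfolding row_stochastic_def stationary_dist_def good_def by auto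
  define L where "L = (\<lambda>k. lambda2 (time_reversal n \<pi> (P ^\<^sub>m k) * P ^\<^sub>m k))"
  define f where "f = (\<lambda>k. gamma_dagger n \<pi> (P ^\<^sub>m k) / real k)"
  have fL: "f k = (1 - L k) / real k" for k unfolding f_def L_def gamma_dagger_def ..
  have Lb: "0 \<le> L k \<and> L k \<le> 1" for k
    unfolding L_def using LL_bounds[OF pos sum1 good_pow[OF pos sum1 gP]] by blast
  have fle: "f k \<le> 1 / real k" if "k \<ge> 1" for k
    unfolding fL using Lb[of k] that by (simp add: divide_right_mono)
  have "\<exists>k0\<ge>1. L k0 < 1"
  proof (cases "n < 2")
    case True
    have "L 1 = 0" unfolding L_def by (rule LL_small[OF pos sum1 good_pow[OF pos sum1 gP] True])
    thus ?thesis by (intro exI[of _ 1]) simp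
  next
    case False
    obtain k where k: "\<forall>i<n. \<forall>j<n. (P ^\<^sub>m k) $$ (i,j) > 0" using prim unfolding primitive_def by blast
    have "k \<noteq> 0"
    proof
      assume "k = 0"
      hence "(P ^\<^sub>m k) $$ (0,1) = 0" using Pc False by simp
      moreover have "(P ^\<^sub>m k) $$ (0,1) > 0" using k False by simp
      ultimately show False by simp
    qed
    moreover have "L k < 1" unfolding L_def
      by (rule LL_pos[OF pos sum1 good_pow[OF pos sum1 gP]]) (use False k in auto)
    ultimately show ?thesis by (intro exI[of _ k]) auto
  qed
  then obtain k0 where k0: "k0 \<ge> 1" "L k0 < 1" by blast
  have fk0: "f k0 > 0" unfolding fL using k0 by simp
  obtain km where km: "km \<ge> 1" "\<forall>k\<ge>1. f k \<le> f km" using sup_att[OF fle k0(1) fk0] by blast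
  define \<gamma> where "\<gamma> = gamma_ps n \<pi> P"
  have \<gamma>: "\<gamma> = f km" unfolding \<gamma>_def gamma_ps_def f_def[symmetric]
    by (rule cSup_eq_maximum) (use km in auto)
  define kp where "kp = k_ps n \<pi> P"
  have ex: "\<exists>k. k \<ge> 1 \<and> gamma_ps n \<pi> P = gamma_dagger n \<pi> (P ^\<^sub>m k) / real k"
    using km \<gamma> unfolding \<gamma>_def f_def by auto
  have "kp \<ge> 1 \<and> gamma_ps n \<pi> P = gamma_dagger n \<pi> (P ^\<^sub>m kp) / real kp"
    unfolding kp_def k_ps_def by (rule LeastI_ex[OF ex])
  hence kp: "kp \<ge> 1" "\<gamma> = f kp" unfolding \<gamma>_def f_def by auto
  have fle\<gamma>: "f k \<le> \<gamma>" if "k \<ge> 1" for k using km that \<gamma> by simp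
  have \<gamma>pos: "\<gamma> > 0" using fle\<gamma>[OF k0(1)] fk0 by simp
  define h where "h = (\<lambda>k. gamma_dagger n \<pi> ((P ^\<^sub>m p) ^\<^sub>m k) / real k)"
  have hf: "h k = real p * f (p * k)" if "k \<ge> 1" for k
  proof -
    have "h k = (1 - L (p * k)) / real k"
      unfolding h_def L_def gamma_dagger_def pow_mat_mult'[OF Pc] ..
    also have "\<dots> = real p * f (p * k)" unfolding fL using p1 that by (simp add: field_simps)
    finally show ?thesis .
  qed
  define \<gamma>p where "\<gamma>p = gamma_ps n \<pi> (P ^\<^sub>m p)"
  have \<gamma>p: "\<gamma>p = (SUP k\<in>{1..}. h k)" unfolding \<gamma>p_def gamma_ps_def h_def ..
  have upper: "\<gamma>p \<le> real p * \<gamma>"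
    unfolding \<gamma>p
  proof (rule cSUP_least)
    fix k :: nat assume "k \<in> {1..}"
    hence k: "k \<ge> 1" by simp
    have "p * k \<ge> 1" using k p1 by simp
    thus "h k \<le> real p * \<gamma>" unfolding hf[OF k] using fle\<gamma> by (simp add: mult_left_mono)
  qed auto
  have hb: "h k \<le> 1" if "k \<ge> 1" for k
  proof -
    have "h k = (1 - L (p * k)) / real k"
      unfolding h_def L_def gamma_dagger_def pow_mat_mult'[OF Pc] ..
    also have "\<dots> \<le> 1" using Lb[of "p * k"] that by (simp add: field_simps)
    finally show ?thesis .
  qed
  have lower: "h kp \<le> \<gamma>p" unfolding \<gamma>p
    by (rule cSUP_upper) (use kp hb in \<open>auto intro!: bdd_aboveI2[where M=1]\<close>)
  define x where "x = real kp * \<gamma>"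
  have xL: "x = 1 - L kp" unfolding x_def kp(2) fL using kp by simp
  have x0: "0 < x" unfolding x_def using kp \<gamma>pos by simp
  have x1: "x \<le> 1" using xL Lb[of kp] by simp
  note x01 = x0 x1
  have Lpow: "L (kp * p) \<le> (L kp)^p"
  proof -
    have "L (kp * p) = lambda2 (time_reversal n \<pi> ((P ^\<^sub>m kp) ^\<^sub>m p) * (P ^\<^sub>m kp) ^\<^sub>m p)"
      unfolding L_def pow_mat_mult'[OF Pc] ..
    also have "\<dots> \<le> (L kp)^p" unfolding L_def by (rule LL_pow[OF pos sum1 good_pow[OF pos sum1 gP]])
    finally show ?thesis .
  qed
  have "h kp = (1 - L (p * kp)) / real kp"
    unfolding h_def L_def gamma_dagger_def pow_mat_mult'[OF Pc] ..
  also have "\<dots> \<ge> (1 - (1 - x)^p) / real kp"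
    using Lpow xL by (intro divide_right_mono) (auto simp: mult.commute)
  finally have hk: "(1 - (1 - x)^p) / real kp \<le> h kp" .
  have "real p * \<gamma> * (1 - real p * real kp * \<gamma> / 2) = (real p * x * (1 - real p * x / 2)) / real kp"
    unfolding x_def using kp by (simp add: field_simps)
  also have "\<dots> < (1 - (1 - x)^p) / real kp"
    using bern[OF x01 p1] kp by (simp add: divide_strict_right_mono)
  finally have strict: "real p * \<gamma> * (1 - real p * real kp * \<gamma> / 2) < \<gamma>p" using hk lower by simp
  have third: "real p * \<gamma> / 2 \<le> \<gamma>p" if pc: "real p \<le> 1 / (real kp * \<gamma>)"
  proof -
    have kg: "real kp * \<gamma> > 0" using kp \<gamma>pos by simp
    have "real p * (real kp * \<gamma>) \<le> 1" using pc kg by (simp add: field_simps)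
    hence "1 / 2 \<le> 1 - real p * real kp * \<gamma> / 2" by (simp add: algebra_simps)
    hence "real p * \<gamma> * (1 / 2) \<le> real p * \<gamma> * (1 - real p * real kp * \<gamma> / 2)"
      using \<gamma>pos by (intro mult_left_mono) auto
    thus ?thesis using strict by simp
  qed
  show ?thesis using strict upper third unfolding \<gamma>_def kp_def \<gamma>p_def by auto
qed


end
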